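(* Let $m\ge2$ and consider a preferential (dynamic) attachment circuit of index $m$. Let $W_n$ and $B_n$ be the numbers of white and blue external nodes after $n$ insertions. For $n\ge1$, $$\mathbb{E}[W_n^2]=\frac{(m+1)^3n^3}{(mn+n-1)(2m+1)^2}+\frac{(8m^2-m-1)(m+1)^2n^2+m(m+1)(3m^2-6m-1)n-m(2m^3+6m^2+3m+1)}{(mn+n-1)(2m+1)^2(3m+1)},$$ $$\mathbb{E}[B_n^2]=\frac{4m^2(m+1)^2}{(3m+1)^2(2m+1)^2}\,n^2+\frac{96m^4+138m^3+83m^2+18m+1}{(5m+1)(4m+1)(3m+1)^2}\cdot\frac{4(m+1)m}{(2m+1)^2}\,n+O(1)\quad(n\to\infty).$$
   Context: Preferential (dynamic) attachment circuit of index $m\ge1$: at time $0$ there is a single node labeled $0$. At each time $n\ge1$ a new node labeled $n$ is added and $m$ parents are chosen for it one at a time, with replacement, among nodes $0,\dots,n-1$. Before the $(i+1)$-th choice ($i=0,\dots,m-1$), each existing node $v$ is chosen with probability $\frac{d_i(v)+1}{\sum_{x}(d_i(x)+1)}$, where $d_i(x)$ is the outdegree of $x$ in the current multigraph including the edges created by the first $i$ choices for node $n$; after each choice an edge from the chosen parent to node $n$ is immediately added (multi-edges allowed, counted with multiplicity). External nodes: a node of outdegree $s$ carries $s+1$ external nodes, colored white if the node has outdegree $0$, blue if outdegree $1$, red if outdegree $\ge2$. Thus $W_n$ equals the number of nodes of outdegree $0$ and $B_n$ equals twice the number of nodes of outdegree $1$. *)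

theory Defs
  imports "HOL-Probability.Probability" "HOL-Library.Landau_Symbols"
begin

text \<open>State of the circuit after n insertions: the list of outdegrees of
nodes 0, ..., n (list index = node label). The attachment probabilities and
the colours of external nodes depend only on the outdegrees.\<close>

definition pa_weights :: "nat list \<Rightarrow> nat multiset" where
  "pa_weights ds = (\<Sum>i<length ds. replicate_mset (ds ! i + 1) i)"

text \<open>One parent choice: node i chosen with probability (d(i)+1)/sum(d(x)+1),
then its outdegree is incremented (edge to the new node added).\<close>
definition pa_choose :: "nat list \<Rightarrow> nat list pmf" where
  "pa_choose ds = map_pmf (\<lambda>i. ds[i := ds ! i + 1]) (pmf_of_multiset (pa_weights ds))"

primrec pa_choices :: "nat \<Rightarrow> nat list \<Rightarrow> nat list pmf" where
  "pa_choices 0 ds = return_pmf ds"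
| "pa_choices (Suc k) ds = bind_pmf (pa_choose ds) (pa_choices k)"

definition pa_insert :: "nat \<Rightarrow> nat list \<Rightarrow> nat list pmf" where
  "pa_insert m ds = map_pmf (\<lambda>ds'. ds' @ [0]) (pa_choices m ds)"

primrec pa_circuit :: "nat \<Rightarrow> nat \<Rightarrow> nat list pmf" where
  "pa_circuit m 0 = return_pmf [0]"
| "pa_circuit m (Suc n) = bind_pmf (pa_circuit m n) (pa_insert m)"

definition white_ext :: "nat list \<Rightarrow> nat" where
  "white_ext ds = length (filter (\<lambda>d. d = 0) ds)"

definition blue_ext :: "nat list \<Rightarrow> nat" where
  "blue_ext ds = 2 * length (filter (\<lambda>d. d = 1) ds)"

end

theory Submission
  imports Defs
begin

definition Yc :: "nat list \<Rightarrow> nat" where "Yc ds = length (filter (\<lambda>d. d = 1) ds)"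
definition tot :: "nat list \<Rightarrow> nat" where "tot ds = sum_list ds + length ds"

lemma count_pa_weights: "count (pa_weights ds) x = (if x < length ds then ds ! x + 1 else 0)"
  unfolding pa_weights_def count_sum by (simp only: count_replicate_mset) (simp add: sum.delta')

lemma set_pa_weights: "set_mset (pa_weights ds) = {..<length ds}"
proof (intro set_eqI)
  fix x
  have "x \<in># pa_weights ds \<longleftrightarrow> 0 < count (pa_weights ds) x" by (simp only: count_greater_zero_iff)
  then show "x \<in># pa_weights ds \<longleftrightarrow> x \<in> {..<length ds}" by (simp add: count_pa_weights)
qed

lemma size_pa_weights: "size (pa_weights ds) = tot ds"
  unfolding pa_weights_def tot_def size_multiset_sum size_replicate_mset
  by (simp only: Suc_eq_plus1 sum.distrib) (simp add: sum_list_sum_nth atLeast0LessThan)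

lemma pa_weights_ne: "ds \<noteq> [] \<Longrightarrow> pa_weights ds \<noteq> {#}"
proof
  assume "ds \<noteq> []" "pa_weights ds = {#}"
  then have "0 \<in> set_mset (pa_weights ds)" unfolding set_pa_weights by simp
  with \<open>pa_weights ds = {#}\<close> show False by simp
qed

lemma set_pa_choose: "ds \<noteq> [] \<Longrightarrow> set_pmf (pa_choose ds) = (\<lambda>i. ds[i := ds ! i + 1]) ` {..<length ds}"
  unfolding pa_choose_def by (simp add: pa_weights_ne set_pa_weights)

lemma exp_pa_choose:
  assumes "ds \<noteq> []"
  shows "measure_pmf.expectation (pa_choose ds) f =
     (\<Sum>i<length ds. real (ds ! i + 1) * f (ds[i := ds ! i + 1])) / real (tot ds)"
proof -
  have "measure_pmf.expectation (pa_choose ds) f =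
      measure_pmf.expectation (pmf_of_multiset (pa_weights ds)) (\<lambda>i. f (ds[i := ds ! i + 1]))"
    unfolding pa_choose_def by simp
  also have "\<dots> = (\<Sum>i<length ds. pmf (pmf_of_multiset (pa_weights ds)) i *\<^sub>R f (ds[i := ds ! i + 1]))"
    by (rule integral_measure_pmf) (use assms in \<open>auto simp: pa_weights_ne set_pa_weights\<close>)
  also have "\<dots> = (\<Sum>i<length ds. real (ds ! i + 1) * f (ds[i := ds ! i + 1]) / real (tot ds))"
  proof (rule sum.cong[OF refl])
    fix i assume "i \<in> {..<length ds}"
    then have "pmf (pmf_of_multiset (pa_weights ds)) i = real (ds ! i + 1) / real (tot ds)"
      using assms by (simp add: pa_weights_ne count_pa_weights size_pa_weights)
    then show "pmf (pmf_of_multiset (pa_weights ds)) i *\<^sub>R f (ds[i := ds ! i + 1]) =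
        real (ds ! i + 1) * f (ds[i := ds ! i + 1]) / real (tot ds)" by simp
  qed
  also have "\<dots> = (\<Sum>i<length ds. real (ds ! i + 1) * f (ds[i := ds ! i + 1])) / real (tot ds)"
    by (rule sum_divide_distrib[symmetric])
  finally show ?thesis .
qed

lemma filter_update_count:
  "i < length xs \<Longrightarrow> length (filter P (xs[i := x])) + (if P (xs ! i) then 1 else 0)
     = length (filter P xs) + (if P x then 1 else 0)"
proof (induction xs arbitrary: i)
  case Nil then show ?case by simp
next
  case (Cons a xs) then show ?case by (cases i) auto
qed

lemma W_upd: "i < length ds \<Longrightarrow> real (white_ext (ds[i := ds ! i + 1])) = real (white_ext ds) - (if ds ! i = 0 then 1 else 0)"
  using filter_update_count[of i ds "\<lambda>d. d = 0" "ds ! i + 1"]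
  unfolding white_ext_def by (auto split: if_splits)

lemma Y_upd: "i < length ds \<Longrightarrow> real (Yc (ds[i := ds ! i + 1])) = real (Yc ds) + (if ds ! i = 0 then 1 else 0) - (if ds ! i = 1 then 1 else 0)"
  using filter_update_count[of i ds "\<lambda>d. d = 1" "ds ! i + 1"]
  unfolding Yc_def by (auto split: if_splits)

lemma tot_upd: "i < length ds \<Longrightarrow> tot (ds[i := ds ! i + 1]) = tot ds + 1"
proof (induction ds arbitrary: i)
  case Nil then show ?case by simp
next
  case (Cons a xs) then show ?case by (cases i) (auto simp: tot_def)
qed

lemma tot_upd': "i < length ds \<Longrightarrow> tot (ds[i := Suc (ds ! i)]) = Suc (tot ds)"
  using tot_upd by simp

lemma sum_list_G:
  assumes "\<And>d. d \<ge> 2 \<Longrightarrow> G d = G 2"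
  shows "sum_list (map (\<lambda>d. real (d + 1) * G d) ds) =
     real (white_ext ds) * G 0 + 2 * real (Yc ds) * G 1 + (real (tot ds) - real (white_ext ds) - 2 * real (Yc ds)) * G 2"
proof (induction ds)
  case Nil then show ?case by (simp add: white_ext_def Yc_def tot_def)
next
  case (Cons d ds)
  consider "d = 0" | "d = 1" | "d \<ge> 2" by linarith
  then show ?case
  proof cases
    case 1 then show ?thesis using Cons by (simp add: white_ext_def Yc_def tot_def algebra_simps)
  next
    case 2 then show ?thesis using Cons by (simp add: white_ext_def Yc_def tot_def algebra_simps)
  next
    case 3 then show ?thesis using Cons assms[OF 3] by (simp add: white_ext_def Yc_def tot_def algebra_simps)
  qed
qed

lemma exp_choose_g:
  assumes "ds \<noteq> []"
    and "\<And>i. i < length ds \<Longrightarrow> c * h (ds[i := ds ! i + 1]) =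
           g (real (white_ext (ds[i := ds ! i + 1]))) (real (Yc (ds[i := ds ! i + 1])))"
  shows "c * measure_pmf.expectation (pa_choose ds) h =
    (real (white_ext ds) * g (real (white_ext ds) - 1) (real (Yc ds) + 1)
     + 2 * real (Yc ds) * g (real (white_ext ds)) (real (Yc ds) - 1)
     + (real (tot ds) - real (white_ext ds) - 2 * real (Yc ds)) * g (real (white_ext ds)) (real (Yc ds)))
    / real (tot ds)"
proof -
  define Wr Yr where "Wr = real (white_ext ds)" and "Yr = real (Yc ds)"
  define G where "G d = g (Wr - (if d = 0 then 1 else 0)) (Yr + (if d = 0 then 1 else 0) - (if d = 1 then 1 else 0))" for d :: nat
  have "(\<Sum>i<length ds. real (ds ! i + 1) * (c * h (ds[i := ds ! i + 1]))) = (\<Sum>i<length ds. real (ds ! i + 1) * G (ds ! i))"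
  proof (rule sum.cong[OF refl])
    fix i assume "i \<in> {..<length ds}"
    then have i: "i < length ds" by simp
    show "real (ds ! i + 1) * (c * h (ds[i := ds ! i + 1])) = real (ds ! i + 1) * G (ds ! i)"
      unfolding assms(2)[OF i] W_upd[OF i] Y_upd[OF i] G_def Wr_def Yr_def by (rule refl)
  qed
  also have "\<dots> = sum_list (map (\<lambda>d. real (d + 1) * G d) ds)"
    by (simp add: sum_list_sum_nth atLeast0LessThan)
  also have "\<dots> = Wr * G 0 + 2 * Yr * G 1 + (real (tot ds) - Wr - 2 * Yr) * G 2"
    unfolding Wr_def Yr_def by (rule sum_list_G) (simp add: G_def)
  finally have "(\<Sum>i<length ds. real (ds ! i + 1) * (c * h (ds[i := ds ! i + 1]))) = Wr * G 0 + 2 * Yr * G 1 + (real (tot ds) - Wr - 2 * Yr) * G 2" .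
  moreover have "c * measure_pmf.expectation (pa_choose ds) h = (\<Sum>i<length ds. real (ds ! i + 1) * (c * h (ds[i := ds ! i + 1]))) / real (tot ds)"
    using assms(1) by (simp add: exp_pa_choose sum_distrib_left algebra_simps)
  ultimately show ?thesis by (simp add: G_def Wr_def Yr_def)
qed

lemma finite_set_pa_choose: "ds \<noteq> [] \<Longrightarrow> finite (set_pmf (pa_choose ds))"
  by (simp add: set_pa_choose)

lemma set_pa_choose_inv: "ds \<noteq> [] \<Longrightarrow> x \<in> set_pmf (pa_choose ds) \<Longrightarrow> length x = length ds \<and> tot x = tot ds + 1"
  by (auto simp: set_pa_choose tot_upd')

lemma set_pa_choices:
  "ds \<noteq> [] \<Longrightarrow> finite (set_pmf (pa_choices k ds)) \<and> (\<forall>x\<in>set_pmf (pa_choices k ds). length x = length ds \<and> tot x = tot ds + k)"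
proof (induction k arbitrary: ds)
  case 0 then show ?case by simp
next
  case (Suc k)
  have A: "\<And>x. x \<in> set_pmf (pa_choose ds) \<Longrightarrow> x \<noteq> [] \<and> length x = length ds \<and> tot x = tot ds + 1"
    using set_pa_choose_inv[OF Suc.prems] Suc.prems by fastforce
  have S: "set_pmf (pa_choices (Suc k) ds) = (\<Union>x\<in>set_pmf (pa_choose ds). set_pmf (pa_choices k x))"
    by (simp add: set_bind_pmf)
  show ?case
  proof
    show "finite (set_pmf (pa_choices (Suc k) ds))"
      unfolding S
    proof (rule finite_UN_I)
      show "finite (set_pmf (pa_choose ds))" by (rule finite_set_pa_choose[OF Suc.prems])
      fix x assume "x \<in> set_pmf (pa_choose ds)"
      then have "x \<noteq> []" using A by blast
      then show "finite (set_pmf (pa_choices k x))" using Suc.IH by blast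
    qed
    show "\<forall>y\<in>set_pmf (pa_choices (Suc k) ds). length y = length ds \<and> tot y = tot ds + Suc k"
      unfolding S
    proof (intro ballI, elim UN_E)
      fix y x assume x: "x \<in> set_pmf (pa_choose ds)" and y: "y \<in> set_pmf (pa_choices k x)"
      have "x \<noteq> []" "length x = length ds" "tot x = tot ds + 1" using A[OF x] by auto
      with Suc.IH[of x] y show "length y = length ds \<and> tot y = tot ds + Suc k" by auto
    qed
  qed
qed

lemma exp_as_sum: "finite (set_pmf p) \<Longrightarrow> measure_pmf.expectation p (f :: 'a \<Rightarrow> real) = (\<Sum>a\<in>set_pmf p. pmf p a * f a)"
  by (subst integral_measure_pmf[of "set_pmf p"]) auto

lemma exp_bind:
  assumes "finite (set_pmf p)" "\<And>x. x \<in> set_pmf p \<Longrightarrow> finite (set_pmf (f x))"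
  shows "measure_pmf.expectation (bind_pmf p f) (h :: 'b \<Rightarrow> real) = measure_pmf.expectation p (\<lambda>x. measure_pmf.expectation (f x) h)"
  using pmf_expectation_bind[of "set_pmf p" f p h] assms by (simp add: exp_as_sum)

lemma choices_generic:
  fixes mu :: "nat list \<Rightarrow> real" and fac :: "real \<Rightarrow> real \<Rightarrow> real"
    and Q :: "real \<Rightarrow> real \<Rightarrow> real \<Rightarrow> real \<Rightarrow> real"
  assumes base: "\<And>ds. ds \<noteq> [] \<Longrightarrow> fac 0 (real (tot ds)) * mu ds = Q 0 (real (white_ext ds)) (real (Yc ds)) (real (tot ds))"
    and shift: "\<And>K T. fac (K + 1) T = fac K (T + 1)"
    and step: "\<And>K W Y T. W * Q K (W - 1) (Y + 1) (T + 1) + 2 * Y * Q K W (Y - 1) (T + 1)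
                 + (T - W - 2 * Y) * Q K W Y (T + 1) = T * Q (K + 1) W Y T"
  shows "ds \<noteq> [] \<Longrightarrow> fac (real k) (real (tot ds)) * measure_pmf.expectation (pa_choices k ds) mu
           = Q (real k) (real (white_ext ds)) (real (Yc ds)) (real (tot ds))"
proof (induction k arbitrary: ds)
  case 0 then show ?case using base by simp
next
  case (Suc k)
  have tpos: "real (tot ds) > 0" using Suc.prems by (cases ds) (auto simp: tot_def)
  have "measure_pmf.expectation (pa_choices (Suc k) ds) mu =
        measure_pmf.expectation (pa_choose ds) (\<lambda>x. measure_pmf.expectation (pa_choices k x) mu)"
    unfolding pa_choices.simps
  proof (rule exp_bind)
    show "finite (set_pmf (pa_choose ds))" using finite_set_pa_choose[OF Suc.prems] .
    fix x assume "x \<in> set_pmf (pa_choose ds)"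
    then have "x \<noteq> []" using set_pa_choose_inv[OF Suc.prems] Suc.prems by fastforce
    then show "finite (set_pmf (pa_choices k x))" using set_pa_choices by blast
  qed
  also have "fac (real (Suc k)) (real (tot ds)) * \<dots> =
     (real (white_ext ds) * Q (real k) (real (white_ext ds) - 1) (real (Yc ds) + 1) (real (tot ds) + 1)
     + 2 * real (Yc ds) * Q (real k) (real (white_ext ds)) (real (Yc ds) - 1) (real (tot ds) + 1)
     + (real (tot ds) - real (white_ext ds) - 2 * real (Yc ds)) * Q (real k) (real (white_ext ds)) (real (Yc ds)) (real (tot ds) + 1))
    / real (tot ds)"
  proof (rule exp_choose_g[OF Suc.prems])
    fix i assume i: "i < length ds"
    have ne: "ds[i := ds ! i + 1] \<noteq> []" using Suc.prems by simp
    have "fac (real (Suc k)) (real (tot ds)) = fac (real k) (real (tot (ds[i := ds ! i + 1])))"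
      using shift[of "real k" "real (tot ds)"] by (simp add: tot_upd'[OF i] add.commute)
    then show "fac (real (Suc k)) (real (tot ds)) * measure_pmf.expectation (pa_choices k (ds[i := ds ! i + 1])) mu =
       Q (real k) (real (white_ext (ds[i := ds ! i + 1]))) (real (Yc (ds[i := ds ! i + 1]))) (real (tot ds) + 1)"
      using Suc.IH[OF ne] by (simp add: tot_upd'[OF i] add.commute)
  qed
  also have "\<dots> = real (tot ds) * Q (real k + 1) (real (white_ext ds)) (real (Yc ds)) (real (tot ds)) / real (tot ds)"
    by (simp only: step)
  also have "\<dots> = Q (real (Suc k)) (real (white_ext ds)) (real (Yc ds)) (real (tot ds))"
    using tpos by (simp add: add.commute)
  finally show ?case .
qed

lemma ch_W: "ds \<noteq> [] \<Longrightarrow> (real (tot ds) + real k - 1) * measure_pmf.expectation (pa_choices k ds) (\<lambda>x. real (white_ext x))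
   = real (white_ext ds) * (real (tot ds) - 1)"
  by (rule choices_generic[where fac = "\<lambda>K T. T + K - 1" and Q = "\<lambda>K W Y T. W * (T - 1)"]) (auto simp: algebra_simps)

lemma ch_WW: "ds \<noteq> [] \<Longrightarrow> ((real (tot ds) + real k - 2) * (real (tot ds) + real k - 1)) * measure_pmf.expectation (pa_choices k ds) (\<lambda>x. real (white_ext x)^2)
   = (real (tot ds) - 1) * (real (white_ext ds)^2 * (real (tot ds) - 2) + real k * real (white_ext ds))"
  by (rule choices_generic[where fac = "\<lambda>K T. (T + K - 2) * (T + K - 1)" and Q = "\<lambda>K W Y T. (T - 1) * (W^2 * (T - 2) + K * W)"]) (auto simp: algebra_simps power2_eq_square)

lemma ch_Y: "ds \<noteq> [] \<Longrightarrow> ((real (tot ds) + real k - 2) * (real (tot ds) + real k - 1)) * measure_pmf.expectation (pa_choices k ds) (\<lambda>x. real (Yc x))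
   = real (Yc ds) * (real (tot ds) - 2) * (real (tot ds) - 1) + real k * real (white_ext ds) * (real (tot ds) - 1)"
  by (rule choices_generic[where fac = "\<lambda>K T. (T + K - 2) * (T + K - 1)" and Q = "\<lambda>K W Y T. Y * (T - 2) * (T - 1) + K * W * (T - 1)"]) (auto simp: algebra_simps)

lemma ch_WY: "ds \<noteq> [] \<Longrightarrow> ((real (tot ds) + real k - 3) * (real (tot ds) + real k - 2) * (real (tot ds) + real k - 1)) * measure_pmf.expectation (pa_choices k ds) (\<lambda>x. real (white_ext x) * real (Yc x))
   = real (white_ext ds) * real (Yc ds) * (real (tot ds) - 3) * (real (tot ds) - 2) * (real (tot ds) - 1)
     + real k * (real (tot ds) - 1) * (real (tot ds) - 2) * real (white_ext ds) * (real (white_ext ds) - 1)"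
  by (rule choices_generic[where fac = "\<lambda>K T. (T + K - 3) * (T + K - 2) * (T + K - 1)"
       and Q = "\<lambda>K W Y T. W * Y * (T - 3) * (T - 2) * (T - 1) + K * (T - 1) * (T - 2) * W * (W - 1)"]) (auto simp: algebra_simps)

definition QYY2 :: "real \<Rightarrow> real \<Rightarrow> real \<Rightarrow> real \<Rightarrow> real" where
  "QYY2 K W Y T = 2 * Y * Y * (T - 4) * (T - 3) * (T - 2) * (T - 1)
     + (T - 1) * (2 * (T - 2) * (T - 3) * (2 * W * Y + W + 2 * Y) * K
       + (2 * (T - 2) * W * (W - 1) + W * (2 * T - 5) + 2 * Y * (T - 2) + 2 * W * (T - 3)) * (K * (K - 1))
       + W * ((K - 1) * K * (2 * K - 1)))"

lemma QYY2_step: "W * QYY2 K (W - 1) (Y + 1) (T + 1) + 2 * Y * QYY2 K W (Y - 1) (T + 1)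
                 + (T - W - 2 * Y) * QYY2 K W Y (T + 1) = T * QYY2 (K + 1) W Y T"
  unfolding QYY2_def by (simp add: algebra_simps)

lemma ch_YY: "ds \<noteq> [] \<Longrightarrow> ((real (tot ds) + real k - 4) * (real (tot ds) + real k - 3) * (real (tot ds) + real k - 2) * (real (tot ds) + real k - 1)) * measure_pmf.expectation (pa_choices k ds) (\<lambda>x. 2 * real (Yc x)^2)
   = QYY2 (real k) (real (white_ext ds)) (real (Yc ds)) (real (tot ds))"
  by (rule choices_generic[where fac = "\<lambda>K T. (T + K - 4) * (T + K - 3) * (T + K - 2) * (T + K - 1)" and Q = QYY2])
    (simp add: QYY2_def power2_eq_square, simp add: algebra_simps, rule QYY2_step)

lemma exp_cong: "(\<And>x. x \<in> set_pmf p \<Longrightarrow> f x = g x) \<Longrightarrow>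
   measure_pmf.expectation p (f :: 'a \<Rightarrow> real) = measure_pmf.expectation p g"
  by (rule integral_cong_AE) (auto simp: AE_measure_pmf_iff)

lemma exp_add: "finite (set_pmf p) \<Longrightarrow>
   measure_pmf.expectation p (\<lambda>x. (f x :: real) + g x) = measure_pmf.expectation p f + measure_pmf.expectation p g"
  using integrable_measure_pmf_finite[of p f] integrable_measure_pmf_finite[of p g] by simp

lemma exp_cmult: "measure_pmf.expectation p (\<lambda>x. c * (f x :: real)) = c * measure_pmf.expectation p f"
  by (rule integral_mult_right_zero)

lemma exp_const: "measure_pmf.expectation p (\<lambda>x. c :: real) = c"
  by simp

lemma exp_lin5: "finite (set_pmf p) \<Longrightarrow>
   measure_pmf.expectation p (\<lambda>x. a1 * f1 x + a2 * f2 x + a3 * f3 x + a4 * f4 x + a5 * f5 x + (a0::real))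
   = a1 * measure_pmf.expectation p f1 + a2 * measure_pmf.expectation p f2 + a3 * measure_pmf.expectation p f3
     + a4 * measure_pmf.expectation p f4 + a5 * measure_pmf.expectation p f5 + a0"
  by (simp only: exp_add exp_cmult exp_const)

lemma W_app: "white_ext (x @ [0]) = white_ext x + 1" by (simp add: white_ext_def)
lemma Y_app: "Yc (x @ [0]) = Yc x" by (simp add: Yc_def)
lemma tot_app: "tot (x @ [0]) = tot x + 1" by (simp add: tot_def)

lemma set_pa_insert: "set_pmf (pa_insert m ds) = (\<lambda>x. x @ [0]) ` set_pmf (pa_choices m ds)"
  by (simp add: pa_insert_def)

lemma insert_supp: "ds \<noteq> [] \<Longrightarrow> finite (set_pmf (pa_insert m ds)) \<and>
   (\<forall>x\<in>set_pmf (pa_insert m ds). x \<noteq> [] \<and> tot x = tot ds + m + 1)"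
  using set_pa_choices[of ds m] by (auto simp: set_pa_insert tot_app)

lemma circ_supp: "finite (set_pmf (pa_circuit m n)) \<and> (\<forall>x\<in>set_pmf (pa_circuit m n). x \<noteq> [] \<and> tot x = (m + 1) * n + 1)"
proof (induction n)
  case 0 then show ?case by (simp add: tot_def)
next
  case (Suc n)
  have S: "set_pmf (pa_circuit m (Suc n)) = (\<Union>x\<in>set_pmf (pa_circuit m n). set_pmf (pa_insert m x))"
    by (simp add: set_bind_pmf)
  show ?case
  proof
    show "finite (set_pmf (pa_circuit m (Suc n)))"
      unfolding S using Suc.IH insert_supp by blast
    show "\<forall>y\<in>set_pmf (pa_circuit m (Suc n)). y \<noteq> [] \<and> tot y = (m + 1) * Suc n + 1"
      unfolding S
    proof (intro ballI, elim UN_E)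
      fix x y assume x: "x \<in> set_pmf (pa_circuit m n)" and y: "y \<in> set_pmf (pa_insert m x)"
      have "x \<noteq> []" "tot x = (m + 1) * n + 1" using Suc.IH x by auto
      with insert_supp[of x m] y show "y \<noteq> [] \<and> tot y = (m + 1) * Suc n + 1" by auto
    qed
  qed
qed

lemma circ_step: "measure_pmf.expectation (pa_circuit m (Suc n)) (h :: nat list \<Rightarrow> real) =
   measure_pmf.expectation (pa_circuit m n) (\<lambda>ds. measure_pmf.expectation (pa_insert m ds) h)"
  unfolding pa_circuit.simps using circ_supp insert_supp by (intro exp_bind) blast+

lemma exp_insert: "measure_pmf.expectation (pa_insert m ds) (h :: nat list \<Rightarrow> real) = measure_pmf.expectation (pa_choices m ds) (\<lambda>x. h (x @ [0]))"
  by (simp add: pa_insert_def)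

lemma fin_ch: "ds \<noteq> [] \<Longrightarrow> finite (set_pmf (pa_choices k ds))"
  using set_pa_choices by blast

lemma tot_pos: "ds \<noteq> [] \<Longrightarrow> real (tot ds) \<ge> 1"
  by (cases ds) (auto simp: tot_def)

lemma solve_div: "c * (E::real) = Q \<Longrightarrow> c \<noteq> 0 \<Longrightarrow> E = Q / c"
  by (simp add: eq_divide_eq mult.commute)

lemma ins_W:
  assumes "ds \<noteq> []" "m \<ge> 2"
  shows "measure_pmf.expectation (pa_insert m ds) (\<lambda>x. real (white_ext x)) =
    real (white_ext ds) * (real (tot ds) - 1) / (real (tot ds) + real m - 1) + 1"
proof -
  have pos: "real (tot ds) + real m - 1 > 0" using tot_pos[OF assms(1)] assms(2) by simp
  have "measure_pmf.expectation (pa_insert m ds) (\<lambda>x. real (white_ext x)) =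
        measure_pmf.expectation (pa_choices m ds) (\<lambda>x. real (white_ext x) + 1)"
    unfolding exp_insert W_app of_nat_add of_nat_1 by (rule refl)
  also have "\<dots> = measure_pmf.expectation (pa_choices m ds) (\<lambda>x. real (white_ext x)) + 1"
    using fin_ch[OF assms(1)] by (simp only: exp_add exp_const)
  also have "measure_pmf.expectation (pa_choices m ds) (\<lambda>x. real (white_ext x)) =
     real (white_ext ds) * (real (tot ds) - 1) / (real (tot ds) + real m - 1)"
    using pos by (intro solve_div[OF ch_W[OF assms(1), of m]]) auto
  finally show ?thesis .
qed

lemma ins_WW:
  assumes "ds \<noteq> []" "m \<ge> 2"
  shows "measure_pmf.expectation (pa_insert m ds) (\<lambda>x. real (white_ext x)^2) =
    (real (tot ds) - 1) * (real (white_ext ds)^2 * (real (tot ds) - 2) + real m * real (white_ext ds))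
      / ((real (tot ds) + real m - 2) * (real (tot ds) + real m - 1))
    + 2 * (real (white_ext ds) * (real (tot ds) - 1) / (real (tot ds) + real m - 1)) + 1"
proof -
  have pos: "real (tot ds) + real m - 1 > 0" "real (tot ds) + real m - 2 > 0" using tot_pos[OF assms(1)] assms(2) by auto
  have "measure_pmf.expectation (pa_insert m ds) (\<lambda>x. real (white_ext x)^2) =
        measure_pmf.expectation (pa_choices m ds) (\<lambda>x. real (white_ext x)^2 + 2 * real (white_ext x) + 1)"
    by (simp add: exp_insert W_app power2_eq_square algebra_simps)
  also have "\<dots> = measure_pmf.expectation (pa_choices m ds) (\<lambda>x. real (white_ext x)^2)
       + 2 * measure_pmf.expectation (pa_choices m ds) (\<lambda>x. real (white_ext x)) + 1"
    using fin_ch[OF assms(1)] by (simp only: exp_add exp_const exp_cmult)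
  also have "measure_pmf.expectation (pa_choices m ds) (\<lambda>x. real (white_ext x)) =
     real (white_ext ds) * (real (tot ds) - 1) / (real (tot ds) + real m - 1)"
    using pos by (intro solve_div[OF ch_W[OF assms(1), of m]]) auto
  also have "measure_pmf.expectation (pa_choices m ds) (\<lambda>x. real (white_ext x)^2) =
     (real (tot ds) - 1) * (real (white_ext ds)^2 * (real (tot ds) - 2) + real m * real (white_ext ds))
      / ((real (tot ds) + real m - 2) * (real (tot ds) + real m - 1))"
    using pos by (intro solve_div[OF ch_WW[OF assms(1), of m]]) auto
  finally show ?thesis .
qed

lemma ins_Y:
  assumes "ds \<noteq> []" "m \<ge> 2"
  shows "measure_pmf.expectation (pa_insert m ds) (\<lambda>x. real (Yc x)) =
    (real (Yc ds) * (real (tot ds) - 2) * (real (tot ds) - 1) + real m * real (white_ext ds) * (real (tot ds) - 1))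
      / ((real (tot ds) + real m - 2) * (real (tot ds) + real m - 1))"
proof -
  have pos: "real (tot ds) + real m - 1 > 0" "real (tot ds) + real m - 2 > 0" using tot_pos[OF assms(1)] assms(2) by auto
  have "measure_pmf.expectation (pa_insert m ds) (\<lambda>x. real (Yc x)) =
        measure_pmf.expectation (pa_choices m ds) (\<lambda>x. real (Yc x))"
    by (simp add: exp_insert Y_app)
  also have "\<dots> = (real (Yc ds) * (real (tot ds) - 2) * (real (tot ds) - 1) + real m * real (white_ext ds) * (real (tot ds) - 1))
      / ((real (tot ds) + real m - 2) * (real (tot ds) + real m - 1))"
    using pos by (intro solve_div[OF ch_Y[OF assms(1), of m]]) auto
  finally show ?thesis .
qed

lemma ins_WY:
  assumes "ds \<noteq> []" "m \<ge> 2" "real (tot ds) \<ge> 2"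
  shows "measure_pmf.expectation (pa_insert m ds) (\<lambda>x. real (white_ext x) * real (Yc x)) =
    (real (white_ext ds) * real (Yc ds) * (real (tot ds) - 3) * (real (tot ds) - 2) * (real (tot ds) - 1)
     + real m * (real (tot ds) - 1) * (real (tot ds) - 2) * real (white_ext ds) * (real (white_ext ds) - 1))
      / ((real (tot ds) + real m - 3) * (real (tot ds) + real m - 2) * (real (tot ds) + real m - 1))
    + measure_pmf.expectation (pa_insert m ds) (\<lambda>x. real (Yc x))"
proof -
  have pos: "real (tot ds) + real m - 1 > 0" "real (tot ds) + real m - 2 > 0" "real (tot ds) + real m - 3 > 0"
    using assms(2,3) by auto
  have "measure_pmf.expectation (pa_insert m ds) (\<lambda>x. real (white_ext x) * real (Yc x)) =
        measure_pmf.expectation (pa_choices m ds) (\<lambda>x. real (white_ext x) * real (Yc x) + real (Yc x))"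
    by (simp add: exp_insert W_app Y_app algebra_simps)
  also have "\<dots> = measure_pmf.expectation (pa_choices m ds) (\<lambda>x. real (white_ext x) * real (Yc x))
       + measure_pmf.expectation (pa_choices m ds) (\<lambda>x. real (Yc x))"
    using fin_ch[OF assms(1)] by (simp only: exp_add)
  also have "measure_pmf.expectation (pa_choices m ds) (\<lambda>x. real (Yc x)) = measure_pmf.expectation (pa_insert m ds) (\<lambda>x. real (Yc x))"
    by (simp add: exp_insert Y_app)
  also have "measure_pmf.expectation (pa_choices m ds) (\<lambda>x. real (white_ext x) * real (Yc x)) =
    (real (white_ext ds) * real (Yc ds) * (real (tot ds) - 3) * (real (tot ds) - 2) * (real (tot ds) - 1)
     + real m * (real (tot ds) - 1) * (real (tot ds) - 2) * real (white_ext ds) * (real (white_ext ds) - 1))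
      / ((real (tot ds) + real m - 3) * (real (tot ds) + real m - 2) * (real (tot ds) + real m - 1))"
    using pos by (intro solve_div[OF ch_WY[OF assms(1), of m]]) auto
  finally show ?thesis .
qed

lemma ins_YY:
  assumes "ds \<noteq> []" "m \<ge> 2" "real (tot ds) \<ge> 3"
  shows "measure_pmf.expectation (pa_insert m ds) (\<lambda>x. real (Yc x)^2) =
    QYY2 (real m) (real (white_ext ds)) (real (Yc ds)) (real (tot ds))
      / (2 * ((real (tot ds) + real m - 4) * (real (tot ds) + real m - 3) * (real (tot ds) + real m - 2) * (real (tot ds) + real m - 1)))"
proof -
  have pos: "real (tot ds) + real m - 1 > 0" "real (tot ds) + real m - 2 > 0" "real (tot ds) + real m - 3 > 0"
     "real (tot ds) + real m - 4 > 0"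
    using assms(2,3) by auto
  have "measure_pmf.expectation (pa_insert m ds) (\<lambda>x. real (Yc x)^2) =
        measure_pmf.expectation (pa_choices m ds) (\<lambda>x. 2 * real (Yc x)^2) / 2"
    by (simp add: exp_insert Y_app exp_cmult)
  also have "\<dots> = QYY2 (real m) (real (white_ext ds)) (real (Yc ds)) (real (tot ds))
      / (2 * ((real (tot ds) + real m - 4) * (real (tot ds) + real m - 3) * (real (tot ds) + real m - 2) * (real (tot ds) + real m - 1)))"
  proof -
    have "measure_pmf.expectation (pa_choices m ds) (\<lambda>x. 2 * real (Yc x)^2) =
      QYY2 (real m) (real (white_ext ds)) (real (Yc ds)) (real (tot ds))
      / ((real (tot ds) + real m - 4) * (real (tot ds) + real m - 3) * (real (tot ds) + real m - 2) * (real (tot ds) + real m - 1))"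
      using pos by (intro solve_div[OF ch_YY[OF assms(1), of m]]) auto
    then show ?thesis by simp
  qed
  finally show ?thesis .
qed

definition "aS m n = measure_pmf.expectation (pa_circuit m n) (\<lambda>x. real (white_ext x))"
definition "bS m n = measure_pmf.expectation (pa_circuit m n) (\<lambda>x. real (white_ext x)^2)"
definition "yS m n = measure_pmf.expectation (pa_circuit m n) (\<lambda>x. real (Yc x))"
definition "pS m n = measure_pmf.expectation (pa_circuit m n) (\<lambda>x. real (white_ext x) * real (Yc x))"
definition "qS m n = measure_pmf.expectation (pa_circuit m n) (\<lambda>x. real (Yc x)^2)"

definition TT :: "nat \<Rightarrow> nat \<Rightarrow> real" where "TT m n = (real m + 1) * real n + 1"

lemma circ_facts: "x \<in> set_pmf (pa_circuit m n) \<Longrightarrow> x \<noteq> [] \<and> real (tot x) = TT m n"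
proof -
  assume "x \<in> set_pmf (pa_circuit m n)"
  then have "x \<noteq> []" "tot x = (m + 1) * n + 1" using circ_supp[of m n] by auto
  then show ?thesis by (simp add: TT_def algebra_simps)
qed

lemma fin_circ: "finite (set_pmf (pa_circuit m n))" using circ_supp by blast

lemma TT_ge: "TT m n \<ge> 1" by (simp add: TT_def)

lemma R_a:
  assumes "m \<ge> 2"
  shows "aS m (Suc n) = ((TT m n - 1) / (TT m n + real m - 1)) * aS m n + 1"
proof -
  have "aS m (Suc n) = measure_pmf.expectation (pa_circuit m n)
      (\<lambda>ds. ((TT m n - 1) / (TT m n + real m - 1)) * real (white_ext ds) + 1)"
    unfolding aS_def circ_step
    by (rule exp_cong) (auto simp: ins_W assms dest!: circ_facts)
  also have "\<dots> = ((TT m n - 1) / (TT m n + real m - 1)) * aS m n + 1"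
    unfolding aS_def using fin_circ by (simp only: exp_add exp_cmult exp_const)
  finally show ?thesis .
qed

lemma R_b:
  assumes "m \<ge> 2"
  shows "bS m (Suc n) = ((TT m n - 1) * (TT m n - 2) / ((TT m n + real m - 2) * (TT m n + real m - 1))) * bS m n
     + ((TT m n - 1) * real m / ((TT m n + real m - 2) * (TT m n + real m - 1)) + 2 * (TT m n - 1) / (TT m n + real m - 1)) * aS m n + 1" (is "_ = ?R")
proof -
  have p: "TT m n + real m - 2 > 0" "TT m n + real m - 1 > 0" using TT_ge[of m n] assms by auto
  have "bS m (Suc n) = measure_pmf.expectation (pa_circuit m n)
      (\<lambda>ds. ((TT m n - 1) * (TT m n - 2) / ((TT m n + real m - 2) * (TT m n + real m - 1))) * real (white_ext ds)^2
     + ((TT m n - 1) * real m / ((TT m n + real m - 2) * (TT m n + real m - 1)) + 2 * (TT m n - 1) / (TT m n + real m - 1)) * real (white_ext ds) + 1)"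
    unfolding bS_def circ_step
  proof (rule exp_cong, goal_cases)
    case (1 ds)
    then have ne: "ds \<noteq> []" and t: "real (tot ds) = TT m n" using circ_facts by auto
    show ?case
      unfolding ins_WW[OF ne assms] t by (simp add: add_divide_distrib ring_distribs mult_ac)
  qed
  also have "\<dots> = ?R"
    unfolding bS_def aS_def using fin_circ by (simp only: exp_add exp_cmult exp_const)
  finally show ?thesis .
qed

lemma R_y:
  assumes "m \<ge> 2"
  shows "yS m (Suc n) = ((TT m n - 2) * (TT m n - 1) / ((TT m n + real m - 2) * (TT m n + real m - 1))) * yS m n
     + (real m * (TT m n - 1) / ((TT m n + real m - 2) * (TT m n + real m - 1))) * aS m n" (is "_ = ?R")
proof -
  have p: "TT m n + real m - 2 > 0" "TT m n + real m - 1 > 0" using TT_ge[of m n] assms by auto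
  have "yS m (Suc n) = measure_pmf.expectation (pa_circuit m n)
      (\<lambda>ds. ((TT m n - 2) * (TT m n - 1) / ((TT m n + real m - 2) * (TT m n + real m - 1))) * real (Yc ds)
     + (real m * (TT m n - 1) / ((TT m n + real m - 2) * (TT m n + real m - 1))) * real (white_ext ds))"
    unfolding yS_def circ_step
  proof (rule exp_cong, goal_cases)
    case (1 ds)
    then have ne: "ds \<noteq> []" and t: "real (tot ds) = TT m n" using circ_facts by auto
    show ?case
      unfolding ins_Y[OF ne assms] t by (simp add: add_divide_distrib ring_distribs mult_ac)
  qed
  also have "\<dots> = ?R"
    unfolding yS_def aS_def using fin_circ by (simp only: exp_add exp_cmult exp_const)
  finally show ?thesis .
qed

lemma TT_ge2: "n \<ge> 1 \<Longrightarrow> TT m n \<ge> real m + 2"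
proof -
  assume "n \<ge> 1"
  then have "real n \<ge> 1" by simp
  then have "(real m + 1) * real n \<ge> (real m + 1) * 1" by (intro mult_left_mono) auto
  then show ?thesis unfolding TT_def by (simp add: algebra_simps)
qed

lemma R_p:
  assumes "m \<ge> 2" "n \<ge> 1"
  shows "pS m (Suc n) = ((TT m n - 3) * (TT m n - 2) * (TT m n - 1) / ((TT m n + real m - 3) * (TT m n + real m - 2) * (TT m n + real m - 1))) * pS m n
     + (real m * (TT m n - 1) * (TT m n - 2) / ((TT m n + real m - 3) * (TT m n + real m - 2) * (TT m n + real m - 1))) * bS m n
     + (- (real m * (TT m n - 1) * (TT m n - 2) / ((TT m n + real m - 3) * (TT m n + real m - 2) * (TT m n + real m - 1)))) * aS m n
     + yS m (Suc n)" (is "_ = ?R")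
proof -
  have T2: "TT m n \<ge> 2" using TT_ge2[OF assms(2), of m] by simp
  have "pS m (Suc n) = measure_pmf.expectation (pa_circuit m n)
      (\<lambda>ds. ((TT m n - 3) * (TT m n - 2) * (TT m n - 1) / ((TT m n + real m - 3) * (TT m n + real m - 2) * (TT m n + real m - 1))) * (real (white_ext ds) * real (Yc ds))
     + (real m * (TT m n - 1) * (TT m n - 2) / ((TT m n + real m - 3) * (TT m n + real m - 2) * (TT m n + real m - 1))) * real (white_ext ds)^2
     + (- (real m * (TT m n - 1) * (TT m n - 2) / ((TT m n + real m - 3) * (TT m n + real m - 2) * (TT m n + real m - 1)))) * real (white_ext ds)
     + measure_pmf.expectation (pa_insert m ds) (\<lambda>x. real (Yc x)))"
    unfolding pS_def circ_step
  proof (rule exp_cong, goal_cases)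
    case (1 ds)
    then have ne: "ds \<noteq> []" and t: "real (tot ds) = TT m n" using circ_facts by auto
    show ?case
      unfolding ins_WY[OF ne assms(1) T2[folded t]] t
      by (simp add: add_divide_distrib diff_divide_distrib ring_distribs mult_ac power2_eq_square)
  qed
  also have "\<dots> = ?R"
    unfolding pS_def bS_def aS_def yS_def circ_step[of m n] using fin_circ by (simp only: exp_add exp_cmult exp_const)
  finally show ?thesis .
qed

definition cYY :: "real \<Rightarrow> real \<Rightarrow> real" where "cYY K T = 2 * (T - 4) * (T - 3) * (T - 2) * (T - 1)"
definition cWY :: "real \<Rightarrow> real \<Rightarrow> real" where "cWY K T = 4 * (T - 1) * (T - 2) * (T - 3) * K"
definition cWW :: "real \<Rightarrow> real \<Rightarrow> real" where "cWW K T = 2 * (T - 1) * (T - 2) * K * (K - 1)"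
definition cW :: "real \<Rightarrow> real \<Rightarrow> real" where "cW K T = (T - 1) * (2 * (T - 2) * (T - 3) * K + (2 * T - 7) * K * (K - 1) + (K - 1) * K * (2 * K - 1))"
definition cY :: "real \<Rightarrow> real \<Rightarrow> real" where "cY K T = (T - 1) * (4 * (T - 2) * (T - 3) * K + 2 * (T - 2) * K * (K - 1))"

lemma QYY2_lin: "QYY2 K W Y T = cYY K T * Y^2 + cWY K T * (W * Y) + cWW K T * W^2 + cW K T * W + cY K T * Y"
  unfolding QYY2_def cYY_def cWY_def cWW_def cW_def cY_def by (simp add: algebra_simps power2_eq_square)

definition "D4 m n = 2 * ((TT m n + real m - 4) * (TT m n + real m - 3) * (TT m n + real m - 2) * (TT m n + real m - 1))"

lemma R_q:
  assumes "m \<ge> 2" "n \<ge> 1"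
  shows "qS m (Suc n) = (cYY (real m) (TT m n) / D4 m n) * qS m n + (cWY (real m) (TT m n) / D4 m n) * pS m n
     + (cWW (real m) (TT m n) / D4 m n) * bS m n + (cW (real m) (TT m n) / D4 m n) * aS m n
     + (cY (real m) (TT m n) / D4 m n) * yS m n + 0" (is "_ = ?R")
proof -
  have T3: "TT m n \<ge> 3" using TT_ge2[OF assms(2), of m] assms(1) by simp
  have "qS m (Suc n) = measure_pmf.expectation (pa_circuit m n)
      (\<lambda>ds. (cYY (real m) (TT m n) / D4 m n) * real (Yc ds)^2 + (cWY (real m) (TT m n) / D4 m n) * (real (white_ext ds) * real (Yc ds))
     + (cWW (real m) (TT m n) / D4 m n) * real (white_ext ds)^2 + (cW (real m) (TT m n) / D4 m n) * real (white_ext ds)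
     + (cY (real m) (TT m n) / D4 m n) * real (Yc ds) + 0)"
    unfolding qS_def circ_step
  proof (rule exp_cong, goal_cases)
    case (1 ds)
    then have ne: "ds \<noteq> []" and t: "real (tot ds) = TT m n" using circ_facts by auto
    show ?case
      unfolding ins_YY[OF ne assms(1) T3[folded t]] t QYY2_lin D4_def
      by (simp add: add_divide_distrib mult_ac)
  qed
  also have "\<dots> = ?R"
    unfolding pS_def bS_def aS_def yS_def qS_def using fin_circ by (rule exp_lin5)
  finally show ?thesis .
qed

definition "k2y M w zz ay bb p2 p1 q2 q1 = (3*M*ay - M*w + ay)" for M w zz ay bb p2 p1 q2 q1 :: real
definition "k1y M w zz ay bb p2 p1 q2 q1 = (2*M*bb + 3*M*M*ay - M*M*w - ay)" for M w zz ay bb p2 p1 q2 q1 :: real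
definition "k0y M w zz ay bb p2 p1 q2 q1 = (- M*ay - M*bb + M*M*bb + M*M*M*ay)" for M w zz ay bb p2 p1 q2 q1 :: real
definition "k4p M w zz ay bb p2 p1 q2 q1 = (5*M*p2 - M*zz - 3*M*M*zz - ay + 2*p2)" for M w zz ay bb p2 p1 q2 q1 :: real
definition "k3p M w zz ay bb p2 p1 q2 q1 = (- 4*M*ay + 4*M*p1 - 4*M*p2 + M*zz + M*w + 10*M*M*p2 + M*M*zz - 8*M*M*M*zz + 2*ay - bb + p1 - 5*p2)" for M w zz ay bb p2 p1 q2 q1 :: real
definition "k2p M w zz ay bb p2 p1 q2 q1 = (6*M*ay - 3*M*bb - 6*M*p1 - 9*M*p2 - M*w - 6*M*M*ay + 6*M*M*p1 - 6*M*M*p2 + M*M*zz + M*M*w + 10*M*M*M*p2 + 6*M*M*M*zz - 3*M*M*M*M*zz + ay + 3*bb - 3*p1 + p2)" for M w zz ay bb p2 p1 q2 q1 :: real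
definition "k1p M w zz ay bb p2 p1 q2 q1 = (2*M*ay + 6*M*bb - 2*M*p1 + 2*M*p2 + 6*M*M*ay - 3*M*M*bb - 6*M*M*p1 - 9*M*M*p2 + M*M*zz - M*M*w - 4*M*M*M*ay + 4*M*M*M*p1 - 4*M*M*M*p2 + 3*M*M*M*zz + 5*M*M*M*M*p2 + 6*M*M*M*M*zz + 2*M*M*M*M*M*zz - 2*ay - 2*bb + 2*p1 + 2*p2)" for M w zz ay bb p2 p1 q2 q1 :: real
definition "k0p M w zz ay bb p2 p1 q2 q1 = (- 2*M*ay - 2*M*bb + 2*M*p1 + 2*M*p2 + M*M*ay + 3*M*M*bb - M*M*p1 + M*M*p2 + 2*M*M*M*ay - M*M*M*bb - 2*M*M*M*p1 - 3*M*M*M*p2 - M*M*M*M*ay + M*M*M*M*p1 - M*M*M*M*p2 + M*M*M*M*M*p2)" for M w zz ay bb p2 p1 q2 q1 :: real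
definition "k5q M w zz ay bb p2 p1 q2 q1 = (- 4*M*p2 + 12*M*q2 + 4*q2)" for M w zz ay bb p2 p1 q2 q1 :: real
definition "k4q M w zz ay bb p2 p1 q2 q1 = (- 4*M*ay - 4*M*p1 + 12*M*p2 + 10*M*q1 - 40*M*q2 + 2*M*zz - 2*M*w + 30*M*M*q2 + 4*M*M*zz - 6*M*M*M*zz + 2*q1 - 22*q2)" for M w zz ay bb p2 p1 q2 q1 :: real
definition "k3q M w zz ay bb p2 p1 q2 q1 = (14*M*ay - 4*M*bb + 12*M*p1 - 8*M*p2 - 40*M*q1 - 2*M*zz + 8*M*w - 2*M*M*ay + 20*M*M*q1 - 80*M*M*q2 - 4*M*M*w + 40*M*M*M*q2 + 18*M*M*M*zz - 16*M*M*M*M*zz - 12*q1 + 32*q2)" for M w zz ay bb p2 p1 q2 q1 :: real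
definition "k2q M w zz ay bb p2 p1 q2 q1 = (- 10*M*ay + 14*M*bb - 8*M*p1 + 30*M*q1 + 60*M*q2 - 10*M*w + 2*M*M*ay - 2*M*M*bb - 60*M*M*q1 - 2*M*M*zz + 16*M*M*w + 20*M*M*M*q1 - 80*M*M*M*q2 - 10*M*M*M*zz - 4*M*M*M*w + 30*M*M*M*M*q2 + 18*M*M*M*M*zz - 6*M*M*M*M*M*zz + 22*q1 - 2*q2)" for M w zz ay bb p2 p1 q2 q1 :: real
definition "k1q M w zz ay bb p2 p1 q2 q1 = (- 10*M*bb + 20*M*q1 - 4*M*q2 + 2*M*M*bb + 30*M*M*q1 + 60*M*M*q2 - 2*M*M*zz - 10*M*M*w - 40*M*M*M*q1 - 4*M*M*M*zz + 8*M*M*M*w + 10*M*M*M*M*q1 - 40*M*M*M*M*q2 - 6*M*M*M*M*zz - 2*M*M*M*M*w + 12*M*M*M*M*M*q2 + 8*M*M*M*M*M*zz + 4*M*M*M*M*M*M*zz - 12*q1 - 12*q2)" for M w zz ay bb p2 p1 q2 q1 :: real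
definition "k0q M w zz ay bb p2 p1 q2 q1 = (- 12*M*q1 - 12*M*q2 + 10*M*M*q1 - 2*M*M*q2 + 10*M*M*M*q1 + 20*M*M*M*q2 - 10*M*M*M*M*q1 + 2*M*M*M*M*M*q1 - 8*M*M*M*M*M*q2 + 2*M*M*M*M*M*M*q2)" for M w zz ay bb p2 p1 q2 q1 :: real

lemma Ry_id: fixes M N w zz ay bb p2 p1 q2 q1 :: real shows "(ay*(N+M+1)+bb)*((N+M-1)*(N+M)) - (N-1)*N*(ay*N+bb) - M*N*((N+M)*w) = k2y M w zz ay bb p2 p1 q2 q1 * N*N + k1y M w zz ay bb p2 p1 q2 q1 * N + k0y M w zz ay bb p2 p1 q2 q1 * 1"
  unfolding k0y_def k1y_def k2y_def by (simp add: algebra_simps)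

lemma Rp_id: fixes M N w zz ay bb p2 p1 q2 q1 :: real shows "(p2*(N+M+1)*(N+M+1)+p1*(N+M+1))*((N+M-2)*(N+M-1)*(N+M)) - (p2*N*N+p1*N)*(N-2)*(N-1)*N - M*N*(((3*M+1)*N*N*N + (8*M*M-M-1)*N*N + M*(3*M*M-6*M-1)*N - M*(2*M*M*M+6*M*M+3*M+1))*zz - (N-1)*((N+M)*w)) - (ay*(N+M+1)+bb)*((N+M-2)*(N+M-1)*(N+M)) = k4p M w zz ay bb p2 p1 q2 q1 * N*N*N*N + k3p M w zz ay bb p2 p1 q2 q1 * N*N*N + k2p M w zz ay bb p2 p1 q2 q1 * N*N + k1p M w zz ay bb p2 p1 q2 q1 * N + k0p M w zz ay bb p2 p1 q2 q1 * 1"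
  unfolding k0p_def k1p_def k2p_def k3p_def k4p_def by (simp add: algebra_simps)

lemma Rq_id: fixes M N w zz ay bb p2 p1 q2 q1 :: real shows "(q2*(N+M+1)*(N+M+1)+q1*(N+M+1))*(2*((N+M-3)*(N+M-2)*(N+M-1)*(N+M))) - (2*(N+1-4)*(N+1-3)*(N+1-2)*(N+1-1))*(q2*N*N+q1*N) - (4*(N+1-1)*(N+1-2)*(N+1-3)*M)*(p2*N*N+p1*N) - 2*N*M*(M-1)*(((3*M+1)*N*N*N + (8*M*M-M-1)*N*N + M*(3*M*M-6*M-1)*N - M*(2*M*M*M+6*M*M+3*M+1))*zz) - ((N+1-1)*(2*(N+1-2)*(N+1-3)*M + (2*(N+1)-7)*M*(M-1) + (M-1)*M*(2*M-1)))*((N+M)*w) - ((N+1-1)*(4*(N+1-2)*(N+1-3)*M + 2*(N+1-2)*M*(M-1)))*(ay*N+bb) = k5q M w zz ay bb p2 p1 q2 q1 * N*N*N*N*N + k4q M w zz ay bb p2 p1 q2 q1 * N*N*N*N + k3q M w zz ay bb p2 p1 q2 q1 * N*N*N + k2q M w zz ay bb p2 p1 q2 q1 * N*N + k1q M w zz ay bb p2 p1 q2 q1 * N + k0q M w zz ay bb p2 p1 q2 q1 * 1"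
  unfolding k0q_def k1q_def k2q_def k3q_def k4q_def k5q_def by (simp add: algebra_simps)

definition "wM (M::real) = 1 / (2*M+1)"
definition "vM (M::real) = 1 / ((2*M+1)*(2*M+1)*(3*M+1))"
definition "ayM (M::real) = M / ((2*M+1)*(3*M+1))"
definition "bbM (M::real) = (M+1) / (2*(2*M+1)*(3*M+1))"
definition "p2M (M::real) = M / ((2*M+1)*(2*M+1)*(3*M+1))"
definition "p1M (M::real) = (1 + 13*M + 53*M*M + 59*M*M*M - 30*M*M*M*M) / (2*(2*M+1)*(2*M+1)*(3*M+1)*(3*M+1)*(4*M+1)*(5*M+1))"
definition "q2M (M::real) = M*M / ((3*M+1)*(3*M+1)*(2*M+1)*(2*M+1))"
definition "q1M (M::real) = M*(96*M*M*M*M + 138*M*M*M + 83*M*M + 18*M + 1) / ((5*M+1)*(4*M+1)*(3*M+1)*(3*M+1)*(2*M+1)*(2*M+1))"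

lemma nzM: "(M::real) \<ge> 0 \<Longrightarrow> 2*M+1 > 0 \<and> 3*M+1 > 0 \<and> 4*M+1 > 0 \<and> 5*M+1 > 0"
  by auto

abbreviation "KK k M \<equiv> k M (wM M) (vM M) (ayM M) (bbM M) (p2M M) (p1M M) (q2M M) (q1M M)"

lemma van_y2: assumes "(M::real) \<ge> 0" shows "KK k2y M = 0"
  unfolding k2y_def wM_def vM_def ayM_def bbM_def p2M_def p1M_def q2M_def q1M_def
  using nzM[OF assms] by (simp add: divide_simps) (simp add: algebra_simps)
lemma van_y1: assumes "(M::real) \<ge> 0" shows "KK k1y M = 0"
  unfolding k1y_def wM_def vM_def ayM_def bbM_def p2M_def p1M_def q2M_def q1M_def
  using nzM[OF assms] by (simp add: divide_simps) (simp add: algebra_simps)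
lemma van_p4: assumes "(M::real) \<ge> 0" shows "KK k4p M = 0"
  unfolding k4p_def wM_def vM_def ayM_def bbM_def p2M_def p1M_def q2M_def q1M_def
  using nzM[OF assms] by (simp add: divide_simps) (simp add: algebra_simps)
lemma van_p3: assumes "(M::real) \<ge> 0" shows "KK k3p M = 0"
  unfolding k3p_def wM_def vM_def ayM_def bbM_def p2M_def p1M_def q2M_def q1M_def
  using nzM[OF assms] by (simp add: divide_simps) (simp add: algebra_simps)
lemma van_q5: assumes "(M::real) \<ge> 0" shows "KK k5q M = 0"
  unfolding k5q_def wM_def vM_def ayM_def bbM_def p2M_def p1M_def q2M_def q1M_def
  using nzM[OF assms] by (simp add: divide_simps) (simp add: algebra_simps)
lemma van_q4: assumes "(M::real) \<ge> 0" shows "KK k4q M = 0"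
  unfolding k4q_def wM_def vM_def ayM_def bbM_def p2M_def p1M_def q2M_def q1M_def
  using nzM[OF assms] by (simp add: divide_simps) (simp add: algebra_simps)

definition "XX m n = (real m + 1) * real n"
definition Ah :: "real \<Rightarrow> real \<Rightarrow> real" where "Ah M N = (N + M) * wM M"
definition BP2 :: "real \<Rightarrow> real \<Rightarrow> real" where "BP2 M N = (3*M+1)*N*N*N + (8*M*M-M-1)*N*N + M*(3*M*M-6*M-1)*N - M*(2*M*M*M+6*M*M+3*M+1)"
definition BPh :: "real \<Rightarrow> real \<Rightarrow> real" where "BPh M N = BP2 M N * vM M"

lemma TT_XX: "TT m n = XX m n + 1" by (simp add: TT_def XX_def)
lemma XX_Suc: "XX m (Suc n) = XX m n + real m + 1" by (simp add: XX_def algebra_simps)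
lemma XX_ge: "n \<ge> 1 \<Longrightarrow> XX m n \<ge> real m + 1"
proof -
  assume "n \<ge> 1"
  then have "real n \<ge> 1" by simp
  then have "(real m + 1) * real n \<ge> (real m + 1) * 1" by (intro mult_left_mono) auto
  then show ?thesis by (simp add: XX_def)
qed

lemma a_cl: assumes "m \<ge> 2" shows "aS m (Suc n) = Ah (real m) (XX m (Suc n))"
proof (induction n)
  case 0
  have "aS m 1 = 1" using R_a[OF assms, of 0] by (simp add: TT_def)
  moreover have "Ah (real m) (XX m 1) = 1" by (simp add: Ah_def XX_def wM_def)
  ultimately show ?case by simp
next
  case (Suc n)
  define X where "X = XX m (Suc n)"
  have X: "X \<ge> real m + 1" unfolding X_def by (rule XX_ge) simp
  have "aS m (Suc (Suc n)) = (X / (X + real m)) * Ah (real m) X + 1"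
    using R_a[OF assms, of "Suc n"] Suc by (simp add: TT_XX X_def)
  also have "\<dots> = Ah (real m) (X + real m + 1)"
    using X by (simp add: Ah_def wM_def divide_simps)
  finally show ?case by (simp add: X_def XX_Suc[of m "Suc n"])
qed

lemma BP2_rec: "BP2 M (X+M+1) * (X+M-1) = X * BP2 M X + (2*M+1)*(3*M+1)*(X*M*(X+M) + 2*X*(X+M-1)*(X+M))
   + (2*M+1)*(2*M+1)*(3*M+1)*(X+M-1)*(X+M)"
  unfolding BP2_def by (simp add: algebra_simps)

lemma b_cl: assumes "m \<ge> 2" shows "bS m (Suc n) = BPh (real m) (XX m (Suc n)) / (XX m (Suc n) - 1)"
proof (induction n)
  case 0
  have "bS m 1 = 1" using R_b[OF assms, of 0] by (simp add: TT_def)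
  moreover have "BPh (real m) (XX m 1) / (XX m 1 - 1) = 1"
    using assms by (simp add: BPh_def BP2_def XX_def vM_def divide_simps) (simp add: algebra_simps)
  ultimately show ?case by simp
next
  case (Suc n)
  define X where "X = XX m (Suc n)"
  define M where "M = real m"
  have X: "X \<ge> M + 1" unfolding X_def M_def by (rule XX_ge) simp
  have M: "M \<ge> 2" using assms by (simp add: M_def)
  have "bS m (Suc (Suc n)) = (X * (X - 1) / ((X + M - 1) * (X + M))) * (BPh M X / (X - 1))
      + (X * M / ((X + M - 1) * (X + M)) + 2 * X / (X + M)) * Ah M X + 1"
    using R_b[OF assms, of "Suc n"] Suc a_cl[OF assms, of n] by (simp add: TT_XX X_def M_def algebra_simps)
  also have "\<dots> = BPh M (X + M + 1) / (X + M)"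
  proof -
    have p: "X - 1 > 0" "X + M - 1 > 0" "X + M > 0" "2*M+1 > 0" "3*M+1 > 0" using X M by auto
    have "BP2 M (X+M+1) * (X+M-1) = X * BP2 M X + (2*M+1)*(3*M+1)*(X*M*(X+M) + 2*X*(X+M-1)*(X+M))
      + (2*M+1)*(2*M+1)*(3*M+1)*(X+M-1)*(X+M)" by (rule BP2_rec)
    with p show ?thesis
      by (simp add: BPh_def Ah_def wM_def vM_def divide_simps) (simp add: algebra_simps)
  qed
  finally show ?case by (simp add: X_def M_def XX_Suc[of m "Suc n"] add.commute add.left_commute)
qed

definition Yh :: "real \<Rightarrow> real \<Rightarrow> real" where "Yh M N = ayM M * N + bbM M"
definition Ph :: "real \<Rightarrow> real \<Rightarrow> real" where "Ph M N = p2M M * N * N + p1M M * N"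
definition Qh :: "real \<Rightarrow> real \<Rightarrow> real" where "Qh M N = q2M M * N * N + q1M M * N"

lemma bnd_rec:
  fixes e rho r :: "nat \<Rightarrow> real"
  assumes rec: "\<And>n. n \<ge> n0 \<Longrightarrow> e (Suc n) = rho n * e n + r n"
    and rho: "\<And>n. n \<ge> n0 \<Longrightarrow> 0 \<le> rho n \<and> rho n \<le> 1"
    and rb: "\<And>n. n \<ge> n0 \<Longrightarrow> \<bar>r n\<bar> \<le> K * (1 - rho n)"
    and n: "n \<ge> n0"
  shows "\<bar>e n\<bar> \<le> max \<bar>e n0\<bar> K"
  using n
proof (induction n rule: dec_induct)
  case base then show ?case by simp
next
  case (step n)
  define B where "B = max \<bar>e n0\<bar> K"
  have r0: "0 \<le> rho n" "rho n \<le> 1" using rho[OF step(1)] by auto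
  have "\<bar>e (Suc n)\<bar> \<le> \<bar>rho n * e n\<bar> + \<bar>r n\<bar>" unfolding rec[OF step(1)] by (rule abs_triangle_ineq)
  also have "\<bar>rho n * e n\<bar> = rho n * \<bar>e n\<bar>" using r0 by (simp add: abs_mult)
  also have "rho n * \<bar>e n\<bar> \<le> rho n * B" using step(3) r0 by (intro mult_left_mono) (auto simp: B_def)
  also have "\<bar>r n\<bar> \<le> K * (1 - rho n)" by (rule rb[OF step(1)])
  also have "K * (1 - rho n) \<le> B * (1 - rho n)" using r0 by (intro mult_right_mono) (auto simp: B_def)
  finally have "\<bar>e (Suc n)\<bar> \<le> rho n * B + B * (1 - rho n)" by simp
  then show ?case by (simp add: B_def algebra_simps)
qed

lemma y_alg:
  fixes X M y A Y0 Y1 :: real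
  assumes "X + M - 1 > 0" "X + M > 0"
  shows "(X + M) * (((X - 1) * X / ((X + M - 1) * (X + M))) * y + (M * X / ((X + M - 1) * (X + M))) * A - Y1)
     = (X / (X + M - 1)) * ((X - 1) * (y - Y0))
       + (- (Y1 * ((X + M - 1) * (X + M)) - (X - 1) * X * Y0 - M * X * A) / (X + M - 1))"
  using assms by (simp add: divide_simps) (simp add: algebra_simps)

lemma Ry_val: assumes "M \<ge> 0"
  shows "Yh M (X + M + 1) * ((X + M - 1) * (X + M)) - (X - 1) * X * Yh M X - M * X * Ah M X = KK k0y M"
  using Ry_id[of "ayM M" X M "bbM M" "wM M" "vM M" "p2M M" "p1M M" "q2M M" "q1M M"] van_y2[OF assms] van_y1[OF assms]
  by (simp add: Yh_def Ah_def)

lemma y_err: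
  assumes m: "m \<ge> 2"
  shows "\<exists>C \<ge> 0. \<forall>n \<ge> 1. \<bar>yS m n - Yh (real m) (XX m n)\<bar> \<le> C / (XX m n - 1)"
proof -
  define M where "M = real m"
  have M: "M \<ge> 2" using m by (simp add: M_def)
  define sy where "sy n = (XX m n - 1) * (yS m n - Yh M (XX m n))" for n
  define rho where "rho n = XX m n / (XX m n + M - 1)" for n
  define r where "r n = - KK k0y M / (XX m n + M - 1)" for n
  define K where "K = \<bar>KK k0y M\<bar> / (M - 1)"
  have rec: "sy (Suc n) = rho n * sy n + r n" if n: "n \<ge> 1" for n
  proof -
    define X where "X = XX m n"
    have X: "X \<ge> M + 1" using XX_ge[OF n, of m] by (simp add: X_def M_def)
    obtain n' where n': "n = Suc n'" using n by (cases n) auto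
    have A: "aS m n = Ah M X" using a_cl[OF m, of n'] by (simp add: n' X_def M_def)
    have Y: "yS m (Suc n) = ((X - 1) * X / ((X + M - 1) * (X + M))) * yS m n + (M * X / ((X + M - 1) * (X + M))) * aS m n"
      using R_y[OF m, of n] by (simp add: TT_XX X_def M_def algebra_simps)
    have XS: "XX m (Suc n) = X + M + 1" by (simp add: XX_Suc X_def M_def)
    have "sy (Suc n) = (X + M) * (((X - 1) * X / ((X + M - 1) * (X + M))) * yS m n + (M * X / ((X + M - 1) * (X + M))) * Ah M X - Yh M (X + M + 1))"
      unfolding sy_def XS Y A by (simp add: algebra_simps)
    also have "\<dots> = (X / (X + M - 1)) * ((X - 1) * (yS m n - Yh M X))
       + (- (Yh M (X + M + 1) * ((X + M - 1) * (X + M)) - (X - 1) * X * Yh M X - M * X * Ah M X) / (X + M - 1))"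
      by (rule y_alg) (use X M in auto)
    also have "\<dots> = rho n * sy n + r n"
    proof -
      have M0: "M \<ge> 0" using M by simp
      show ?thesis unfolding Ry_val[OF M0, of X] by (simp add: rho_def r_def sy_def X_def)
    qed
    finally show ?thesis .
  qed
  have rho: "0 \<le> rho n \<and> rho n \<le> 1" if n: "n \<ge> 1" for n
  proof -
    have X: "XX m n \<ge> M + 1" using XX_ge[OF n, of m] by (simp add: M_def)
    then show ?thesis using M by (simp add: rho_def divide_simps)
  qed
  have rb: "\<bar>r n\<bar> \<le> K * (1 - rho n)" if n: "n \<ge> 1" for n
  proof -
    have X: "XX m n \<ge> M + 1" using XX_ge[OF n, of m] by (simp add: M_def)
    have "K * (1 - rho n) = \<bar>KK k0y M\<bar> / (XX m n + M - 1)"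
      using X M by (simp add: K_def rho_def divide_simps)
    moreover have "\<bar>r n\<bar> = \<bar>KK k0y M\<bar> / (XX m n + M - 1)" using X M by (simp add: r_def abs_div)
    ultimately show ?thesis by simp
  qed
  define C where "C = max \<bar>sy 1\<bar> K"
  have syb: "\<bar>sy n\<bar> \<le> C" if "n \<ge> 1" for n
    unfolding C_def by (rule bnd_rec[of 1 sy rho r K n]) (use rec rho rb that in auto)
  have "\<bar>yS m n - Yh M (XX m n)\<bar> \<le> C / (XX m n - 1)" if n: "n \<ge> 1" for n
  proof -
    have X: "XX m n - 1 > 0" using XX_ge[OF n, of m] M by (simp add: M_def)
    have "\<bar>sy n\<bar> = (XX m n - 1) * \<bar>yS m n - Yh M (XX m n)\<bar>" using X by (simp add: sy_def abs_mult)
    with syb[OF n] X show ?thesis by (simp add: divide_simps mult.commute)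
  qed
  moreover have "C \<ge> 0" by (simp add: C_def)
  ultimately show ?thesis unfolding M_def by blast
qed

lemma rho_le_frac:
  fixes X M a b :: real
  assumes "0 \<le> a" "a \<le> b" "b > 0" "X \<ge> 0" "X + M > 0"
  shows "0 \<le> a * X / (b * (X + M)) \<and> a * X / (b * (X + M)) \<le> X / (X + M)"
proof
  show "0 \<le> a * X / (b * (X + M))" using assms by simp
  have ab: "a / b \<le> 1" "0 \<le> a / b" using assms by auto
  have "a * X / (b * (X + M)) = (a / b) * (X / (X + M))" by simp
  also have "\<dots> \<le> X / (X + M)" using ab assms by (intro mult_left_le_one_le) auto
  finally show "a * X / (b * (X + M)) \<le> X / (X + M)" .
qed

lemma gen_rb:
  fixes r rho C M X :: real
  assumes "C \<ge> 0" "M > 0" "\<bar>r\<bar> \<le> C / (X + M)" "rho \<le> X / (X + M)" "X + M > 0"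
  shows "\<bar>r\<bar> \<le> (C / M) * (1 - rho)"
proof -
  have "M / (X + M) = 1 - X / (X + M)" using assms(5) by (simp add: divide_simps)
  then have "1 - rho \<ge> M / (X + M)" using assms(4) by linarith
  then have "(C / M) * (M / (X + M)) \<le> (C / M) * (1 - rho)"
    using assms by (intro mult_left_mono) auto
  moreover have "(C / M) * (M / (X + M)) = C / (X + M)" using assms by simp
  ultimately show ?thesis using assms(3) by linarith
qed

lemma poly2_bnd:
  fixes X a b c :: real
  assumes "X \<ge> 1"
  shows "\<bar>a * X * X + b * X + c\<bar> \<le> (\<bar>a\<bar> + \<bar>b\<bar> + \<bar>c\<bar>) * (X * X)"
proof -
  have "\<bar>a * X * X + b * X + c\<bar> \<le> \<bar>a\<bar> * (X * X) + \<bar>b\<bar> * X + \<bar>c\<bar>"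
    using assms by (auto simp: abs_mult intro!: order.trans[OF abs_triangle_ineq] add_mono)
  also have "\<dots> \<le> \<bar>a\<bar> * (X * X) + \<bar>b\<bar> * (X * X) + \<bar>c\<bar> * (X * X)"
  proof -
    have "X * 1 \<le> X * X" using assms by (intro mult_left_mono) auto
    then have X1: "X \<le> X * X" by simp
    then have X2: "1 \<le> X * X" using assms by linarith
    have "\<bar>b\<bar> * X \<le> \<bar>b\<bar> * (X * X)" by (rule mult_left_mono[OF X1]) simp
    moreover have "\<bar>c\<bar> * 1 \<le> \<bar>c\<bar> * (X * X)" by (rule mult_left_mono[OF X2]) simp
    ultimately show ?thesis by simp
  qed
  finally show ?thesis by (simp add: algebra_simps)
qed

lemma poly3_bnd:
  fixes X a b c d :: real
  assumes "X \<ge> 1"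
  shows "\<bar>a * X * X * X + b * X * X + c * X + d\<bar> \<le> (\<bar>a\<bar> + \<bar>b\<bar> + \<bar>c\<bar> + \<bar>d\<bar>) * (X * X * X)"
proof -
  have "\<bar>a * X * X * X + b * X * X + c * X + d\<bar> \<le> \<bar>a\<bar> * (X * X * X) + \<bar>b\<bar> * (X * X) + \<bar>c\<bar> * X + \<bar>d\<bar>"
    using assms by (auto simp: abs_mult intro!: order.trans[OF abs_triangle_ineq] add_mono)
  also have "\<dots> \<le> \<bar>a\<bar> * (X * X * X) + \<bar>b\<bar> * (X * X * X) + \<bar>c\<bar> * (X * X * X) + \<bar>d\<bar> * (X * X * X)"
  proof -
    have "X * 1 \<le> X * X" using assms by (intro mult_left_mono) auto
    then have X1: "X \<le> X * X" by simp
    then have X2: "X \<le> X * X" "1 \<le> X * X" using assms by linarith+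
    have "X * X * 1 \<le> X * X * X" using assms X2 by (intro mult_left_mono) auto
    then have X3: "X * X \<le> X * X * X" by simp
    have X4: "X \<le> X * X * X" "1 \<le> X * X * X" using X2 X3 by linarith+
    have "\<bar>b\<bar> * (X * X) \<le> \<bar>b\<bar> * (X * X * X)" by (rule mult_left_mono[OF X3]) simp
    moreover have "\<bar>c\<bar> * X \<le> \<bar>c\<bar> * (X * X * X)" by (rule mult_left_mono[OF X4(1)]) simp
    moreover have "\<bar>d\<bar> * 1 \<le> \<bar>d\<bar> * (X * X * X)" by (rule mult_left_mono[OF X4(2)]) simp
    ultimately show ?thesis by simp
  qed
  finally show ?thesis by (simp add: algebra_simps)
qed

lemma p_alg:
  fixes X M p b A Y1 P0 P1 Yh1 :: real
  assumes "X - 1 > 0" "X + M - 2 > 0" "X + M - 1 > 0" "X + M > 0"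
  shows "((X - 2) * (X - 1) * X / ((X + M - 2) * (X + M - 1) * (X + M))) * p
     + (M * X * (X - 1) / ((X + M - 2) * (X + M - 1) * (X + M))) * (b / (X - 1))
     + (- (M * X * (X - 1) / ((X + M - 2) * (X + M - 1) * (X + M)))) * A + Y1 - P1
   = ((X - 2) * (X - 1) * X / ((X + M - 2) * (X + M - 1) * (X + M))) * (p - P0)
     + ((Y1 - Yh1) - (P1 * ((X + M - 2) * (X + M - 1) * (X + M)) - P0 * (X - 2) * (X - 1) * X
        - M * X * (b - (X - 1) * A) - Yh1 * ((X + M - 2) * (X + M - 1) * (X + M))) / ((X + M - 2) * (X + M - 1) * (X + M)))"
  using assms by (simp add: divide_simps) (simp add: algebra_simps)

lemma Rp_val: assumes "M \<ge> 0"
  shows "Ph M (X + M + 1) * ((X + M - 2) * (X + M - 1) * (X + M)) - Ph M X * (X - 2) * (X - 1) * X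
        - M * X * (BPh M X - (X - 1) * Ah M X) - Yh M (X + M + 1) * ((X + M - 2) * (X + M - 1) * (X + M))
     = KK k2p M * X * X + KK k1p M * X + KK k0p M"
  using Rp_id[of "p2M M" X M "p1M M" "vM M" "wM M" "ayM M" "bbM M" "q2M M" "q1M M"] van_p4[OF assms] van_p3[OF assms]
  by (simp add: Yh_def Ah_def Ph_def BPh_def BP2_def mult.assoc)

lemma XX_le_D2: fixes X M :: real assumes "X \<ge> 1" "M \<ge> 2" shows "X * X \<le> (X + M - 2) * (X + M - 1)"
  using assms by (intro mult_mono) auto

lemma p_err:
  assumes m: "m \<ge> 2"
  shows "\<exists>C \<ge> 0. \<forall>n \<ge> 1. \<bar>pS m n - Ph (real m) (XX m n)\<bar> \<le> C"
proof -
  define M where "M = real m"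
  have M: "M \<ge> 2" using m by (simp add: M_def)
  obtain Cy where Cy: "Cy \<ge> 0" "\<And>n. n \<ge> 1 \<Longrightarrow> \<bar>yS m n - Yh M (XX m n)\<bar> \<le> Cy / (XX m n - 1)"
    using y_err[OF m] unfolding M_def by blast
  define D3 where "D3 X = (X + M - 2) * (X + M - 1) * (X + M)" for X
  define ep where "ep n = pS m n - Ph M (XX m n)" for n
  define rho where "rho n = (XX m n - 2) * (XX m n - 1) * XX m n / D3 (XX m n)" for n
  define Rpf where "Rpf X = Ph M (X + M + 1) * ((X + M - 2) * (X + M - 1) * (X + M)) - Ph M X * (X - 2) * (X - 1) * X
        - M * X * (BPh M X - (X - 1) * Ah M X) - Yh M (X + M + 1) * ((X + M - 2) * (X + M - 1) * (X + M))" for X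
  define r where "r n = (yS m (Suc n) - Yh M (XX m n + M + 1)) - Rpf (XX m n) / D3 (XX m n)" for n
  define Rc where "Rc = \<bar>KK k2p M\<bar> + \<bar>KK k1p M\<bar> + \<bar>KK k0p M\<bar>"
  define K where "K = (Cy + Rc) / M"
  have rec: "ep (Suc n) = rho n * ep n + r n" if n: "n \<ge> 1" for n
  proof -
    define X where "X = XX m n"
    have X: "X \<ge> M + 1" using XX_ge[OF n, of m] by (simp add: X_def M_def)
    obtain n' where n': "n = Suc n'" using n by (cases n) auto
    have A: "aS m n = Ah M X" using a_cl[OF m, of n'] by (simp add: n' X_def M_def)
    have B: "bS m n = BPh M X / (X - 1)" using b_cl[OF m, of n'] by (simp add: n' X_def M_def)
    have P: "pS m (Suc n) = ((X - 2) * (X - 1) * X / ((X + M - 2) * (X + M - 1) * (X + M))) * pS m n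
     + (M * X * (X - 1) / ((X + M - 2) * (X + M - 1) * (X + M))) * bS m n
     + (- (M * X * (X - 1) / ((X + M - 2) * (X + M - 1) * (X + M)))) * aS m n + yS m (Suc n)"
      using R_p[OF m n] by (simp add: TT_XX X_def M_def algebra_simps)
    have XS: "XX m (Suc n) = X + M + 1" by (simp add: XX_Suc X_def M_def)
    have "ep (Suc n) = ((X - 2) * (X - 1) * X / ((X + M - 2) * (X + M - 1) * (X + M))) * pS m n
     + (M * X * (X - 1) / ((X + M - 2) * (X + M - 1) * (X + M))) * (BPh M X / (X - 1))
     + (- (M * X * (X - 1) / ((X + M - 2) * (X + M - 1) * (X + M)))) * Ah M X + yS m (Suc n) - Ph M (X + M + 1)"
      unfolding ep_def XS P A B ..
    also have "\<dots> = ((X - 2) * (X - 1) * X / ((X + M - 2) * (X + M - 1) * (X + M))) * (pS m n - Ph M X)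
     + ((yS m (Suc n) - Yh M (X + M + 1)) - (Ph M (X + M + 1) * ((X + M - 2) * (X + M - 1) * (X + M)) - Ph M X * (X - 2) * (X - 1) * X
        - M * X * (BPh M X - (X - 1) * Ah M X) - Yh M (X + M + 1) * ((X + M - 2) * (X + M - 1) * (X + M))) / ((X + M - 2) * (X + M - 1) * (X + M)))"
      by (rule p_alg) (use X M in auto)
    also have "\<dots> = rho n * ep n + r n"
      by (simp add: rho_def r_def ep_def X_def D3_def Rpf_def)
    finally show ?thesis .
  qed
  have rhoB: "0 \<le> rho n \<and> rho n \<le> XX m n / (XX m n + M)" if n: "n \<ge> 1" for n
  proof -
    have X: "XX m n \<ge> M + 1" using XX_ge[OF n, of m] by (simp add: M_def)
    have "0 \<le> (XX m n - 2) * (XX m n - 1)" using X M by auto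
    moreover have "(XX m n - 2) * (XX m n - 1) \<le> (XX m n + M - 2) * (XX m n + M - 1)" using X M by (intro mult_mono) auto
    moreover have "(XX m n + M - 2) * (XX m n + M - 1) > 0" using X M by auto
    ultimately show ?thesis unfolding rho_def D3_def using X M by (intro rho_le_frac) auto
  qed
  have rho: "0 \<le> rho n \<and> rho n \<le> 1" if n: "n \<ge> 1" for n
  proof -
    have X: "XX m n \<ge> M + 1" using XX_ge[OF n, of m] by (simp add: M_def)
    then have "XX m n / (XX m n + M) \<le> 1" using M by simp
    with rhoB[OF n] show ?thesis by linarith
  qed
  have rb: "\<bar>r n\<bar> \<le> K * (1 - rho n)" if n: "n \<ge> 1" for n
  proof -
    define X where "X = XX m n"
    have X: "X \<ge> M + 1" using XX_ge[OF n, of m] by (simp add: X_def M_def)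
    have D3p: "D3 X > 0" using X M by (simp add: D3_def)
    have e1: "\<bar>yS m (Suc n) - Yh M (X + M + 1)\<bar> \<le> Cy / (X + M)"
      using Cy(2)[of "Suc n"] by (simp add: XX_Suc X_def M_def add.commute add.left_commute)
    have "\<bar>Rpf X\<bar> \<le> Rc * (X * X)"
      unfolding Rpf_def Rp_val[OF order.trans[OF _ M], of X, simplified] Rc_def
      by (rule poly2_bnd) (use X M in auto)
    also have "\<dots> \<le> Rc * ((X + M - 2) * (X + M - 1))"
      by (rule mult_left_mono[OF XX_le_D2]) (use X M in \<open>auto simp: Rc_def\<close>)
    finally have "\<bar>Rpf X\<bar> / D3 X \<le> Rc * ((X + M - 2) * (X + M - 1)) / D3 X"
      using D3p by (simp add: divide_right_mono)
    also have "\<dots> = Rc / (X + M)" using X M by (simp add: D3_def)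
    finally have e2: "\<bar>Rpf X / D3 X\<bar> \<le> Rc / (X + M)" using D3p by (simp add: abs_div)
    have "\<bar>r n\<bar> \<le> Cy / (X + M) + Rc / (X + M)"
      unfolding r_def X_def[symmetric] using e1 e2 by linarith
    also have "\<dots> = (Cy + Rc) / (X + M)" by (simp add: add_divide_distrib)
    finally have "\<bar>r n\<bar> \<le> (Cy + Rc) / (X + M)" .
    moreover have "rho n \<le> X / (X + M)" using rhoB[OF n] by (simp add: X_def)
    moreover have "Cy + Rc \<ge> 0" using Cy(1) by (simp add: Rc_def)
    ultimately show ?thesis unfolding K_def using X M
      by (intro gen_rb[where C = "Cy + Rc" and M = M and r = "r n" and X = X and rho = "rho n"]) auto
  qed
  define C where "C = max \<bar>ep 1\<bar> K"
  have "\<bar>ep n\<bar> \<le> C" if "n \<ge> 1" for n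
    unfolding C_def by (rule bnd_rec[of 1 ep rho r K n]) (use rec rho rb that in auto)
  moreover have "C \<ge> 0" by (simp add: C_def)
  ultimately show ?thesis unfolding ep_def M_def by blast
qed

lemma q_alg:
  fixes X M D cyy cwy cw cy q p b A y Q0 Q1 P0 Y0 :: real
  assumes "D \<noteq> 0" "X - 1 \<noteq> 0"
  shows "(cyy / D) * q + (cwy / D) * p + ((2 * X * (X - 1) * M * (M - 1)) / D) * (b / (X - 1)) + (cw / D) * A + (cy / D) * y + 0 - Q1
    = (cyy / D) * (q - Q0) + ((cwy / D) * (p - P0) + (cy / D) * (y - Y0)
       - (Q1 * D - cyy * Q0 - cwy * P0 - 2 * X * M * (M - 1) * b - cw * A - cy * Y0) / D)"
  using assms by (simp add: divide_simps) (simp add: algebra_simps)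

lemma Rq_val: assumes "M \<ge> 0"
  shows "Qh M (X + M + 1) * (2 * ((X + M - 3) * (X + M - 2) * (X + M - 1) * (X + M))) - cYY M (X + 1) * Qh M X
     - cWY M (X + 1) * Ph M X - 2 * X * M * (M - 1) * BPh M X - cW M (X + 1) * Ah M X - cY M (X + 1) * Yh M X
     = KK k3q M * X * X * X + KK k2q M * X * X + KK k1q M * X + KK k0q M"
  using Rq_id[of "q2M M" X M "q1M M" "p2M M" "p1M M" "vM M" "wM M" "ayM M" "bbM M"] van_q5[OF assms] van_q4[OF assms]
  by (simp add: Yh_def Ah_def Ph_def Qh_def BPh_def BP2_def cYY_def cWY_def cW_def cY_def mult.assoc)

lemma cube_le: fixes X M :: real assumes "X \<ge> 3" "M \<ge> 2"
  shows "X * X * X \<le> 2 * ((X + M - 3) * (X + M - 2) * (X + M - 1))"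
proof -
  have "X * X * X \<le> 2 * ((X - 1) * X * (X + 1))"
  proof -
    have "X * X \<ge> 3 * 3" using assms by (intro mult_mono) auto
    then have "X * (X * X) \<ge> X * 2" using assms by (intro mult_left_mono) auto
    then show ?thesis by (simp add: algebra_simps)
  qed
  also have "(X - 1) * X * (X + 1) \<le> (X + M - 3) * (X + M - 2) * (X + M - 1)"
    using assms by (intro mult_mono) auto
  finally show ?thesis by simp
qed

lemma X3_le: fixes X M :: real assumes "X \<ge> 3" "M \<ge> 2"
  shows "X * (X - 1) * (X - 2) \<le> (X + M - 1) * (X + M - 2) * (X + M - 3)"
  using assms by (intro mult_mono) auto

lemma q_err:
  assumes m: "m \<ge> 2"
  shows "\<exists>C \<ge> 0. \<forall>n \<ge> 1. \<bar>qS m n - Qh (real m) (XX m n)\<bar> \<le> C"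
proof -
  define M where "M = real m"
  have M: "M \<ge> 2" using m by (simp add: M_def)
  have M0: "M \<ge> 0" using M by simp
  obtain Cy where Cy: "Cy \<ge> 0" "\<And>n. n \<ge> 1 \<Longrightarrow> \<bar>yS m n - Yh M (XX m n)\<bar> \<le> Cy / (XX m n - 1)"
    using y_err[OF m] unfolding M_def by blast
  obtain Cp where Cp: "Cp \<ge> 0" "\<And>n. n \<ge> 1 \<Longrightarrow> \<bar>pS m n - Ph M (XX m n)\<bar> \<le> Cp"
    using p_err[OF m] unfolding M_def by blast
  define DD where "DD X = 2 * ((X + M - 3) * (X + M - 2) * (X + M - 1) * (X + M))" for X
  define eq where "eq n = qS m n - Qh M (XX m n)" for n
  define rho where "rho n = cYY M (XX m n + 1) / DD (XX m n)" for n
  define Rqf where "Rqf X = Qh M (X + M + 1) * (2 * ((X + M - 3) * (X + M - 2) * (X + M - 1) * (X + M))) - cYY M (X + 1) * Qh M X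
     - cWY M (X + 1) * Ph M X - 2 * X * M * (M - 1) * BPh M X - cW M (X + 1) * Ah M X - cY M (X + 1) * Yh M X" for X
  define r where "r n = (cWY M (XX m n + 1) / DD (XX m n)) * (pS m n - Ph M (XX m n))
       + (cY M (XX m n + 1) / DD (XX m n)) * (yS m n - Yh M (XX m n)) - Rqf (XX m n) / DD (XX m n)" for n
  define Rc where "Rc = \<bar>KK k3q M\<bar> + \<bar>KK k2q M\<bar> + \<bar>KK k1q M\<bar> + \<bar>KK k0q M\<bar>"
  define K where "K = (2 * M * Cp + (2 * M + M * (M - 1)) * Cy + Rc) / M"
  have rec: "eq (Suc n) = rho n * eq n + r n" if n: "n \<ge> 1" for n
  proof -
    define X where "X = XX m n"
    have X: "X \<ge> M + 1" using XX_ge[OF n, of m] by (simp add: X_def M_def)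
    obtain n' where n': "n = Suc n'" using n by (cases n) auto
    have A: "aS m n = Ah M X" using a_cl[OF m, of n'] by (simp add: n' X_def M_def)
    have B: "bS m n = BPh M X / (X - 1)" using b_cl[OF m, of n'] by (simp add: n' X_def M_def)
    have D: "D4 m n = DD X" by (simp add: D4_def DD_def TT_XX X_def M_def algebra_simps)
    have cww: "cWW M (X + 1) = 2 * X * (X - 1) * M * (M - 1)" by (simp add: cWW_def algebra_simps)
    have Q: "qS m (Suc n) = (cYY M (X + 1) / DD X) * qS m n + (cWY M (X + 1) / DD X) * pS m n
     + (cWW M (X + 1) / DD X) * (BPh M X / (X - 1)) + (cW M (X + 1) / DD X) * Ah M X
     + (cY M (X + 1) / DD X) * yS m n + 0"
      using R_q[OF m n] unfolding D TT_XX A B by (simp add: X_def M_def)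
    have XS: "XX m (Suc n) = X + M + 1" by (simp add: XX_Suc X_def M_def)
    have Dnz: "DD X \<noteq> 0" using X M by (simp add: DD_def)
    have "eq (Suc n) = (cYY M (X + 1) / DD X) * qS m n + (cWY M (X + 1) / DD X) * pS m n
     + ((2 * X * (X - 1) * M * (M - 1)) / DD X) * (BPh M X / (X - 1)) + (cW M (X + 1) / DD X) * Ah M X
     + (cY M (X + 1) / DD X) * yS m n + 0 - Qh M (X + M + 1)"
      unfolding eq_def XS Q cww ..
    also have "\<dots> = (cYY M (X + 1) / DD X) * (qS m n - Qh M X) + ((cWY M (X + 1) / DD X) * (pS m n - Ph M X)
       + (cY M (X + 1) / DD X) * (yS m n - Yh M X)
       - (Qh M (X + M + 1) * DD X - cYY M (X + 1) * Qh M X - cWY M (X + 1) * Ph M X - 2 * X * M * (M - 1) * BPh M X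
          - cW M (X + 1) * Ah M X - cY M (X + 1) * Yh M X) / DD X)"
      by (rule q_alg) (use X M Dnz in auto)
    also have "\<dots> = rho n * eq n + r n"
      by (simp add: rho_def r_def eq_def X_def Rqf_def DD_def)
    finally show ?thesis .
  qed
  have rhoB: "0 \<le> rho n \<and> rho n \<le> XX m n / (XX m n + M)" if n: "n \<ge> 1" for n
  proof -
    define X where "X = XX m n"
    have X: "X \<ge> M + 1" using XX_ge[OF n, of m] by (simp add: X_def M_def)
    have e: "rho n = (2 * ((X - 3) * (X - 2) * (X - 1))) * X / ((2 * ((X + M - 3) * (X + M - 2) * (X + M - 1))) * (X + M))"
      by (simp add: rho_def cYY_def DD_def X_def algebra_simps)
    have "0 \<le> (X - 3) * (X - 2) * (X - 1)" using X M by auto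
    moreover have "(X - 3) * (X - 2) * (X - 1) \<le> (X + M - 3) * (X + M - 2) * (X + M - 1)" using X M by (intro mult_mono) auto
    moreover have "(X + M - 3) * (X + M - 2) * (X + M - 1) > 0" using X M by auto
    ultimately show ?thesis unfolding e X_def[symmetric] using X M by (intro rho_le_frac) auto
  qed
  have rho: "0 \<le> rho n \<and> rho n \<le> 1" if n: "n \<ge> 1" for n
  proof -
    have X: "XX m n \<ge> M + 1" using XX_ge[OF n, of m] by (simp add: M_def)
    then have "XX m n / (XX m n + M) \<le> 1" using M by simp
    with rhoB[OF n] show ?thesis by linarith
  qed
  have rb: "\<bar>r n\<bar> \<le> K * (1 - rho n)" if n: "n \<ge> 1" for n
  proof -
    define X where "X = XX m n"
    have X: "X \<ge> M + 1" using XX_ge[OF n, of m] by (simp add: X_def M_def)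
    have X3: "X \<ge> 3" using X M by simp
    have Dp: "DD X > 0" using X M by (simp add: DD_def)
    define P3 where "P3 = (X + M - 1) * (X + M - 2) * (X + M - 3)"
    have P3p: "P3 > 0" using X M by (simp add: P3_def)
    have DDe: "DD X = 2 * P3 * (X + M)" by (simp add: DD_def P3_def mult_ac)
    have XP: "X * (X - 1) * (X - 2) \<le> P3" unfolding P3_def by (rule X3_le) (use X3 M in auto)
    have ey: "\<bar>yS m n - Yh M X\<bar> \<le> Cy"
    proof -
      have "Cy * 1 \<le> Cy * (X - 1)" using Cy(1) X M by (intro mult_left_mono) auto
      then have "Cy / (X - 1) \<le> Cy" using Cy(1) X M by (simp add: divide_simps)
      with Cy(2)[OF n] show ?thesis by (simp add: X_def)
    qed
    have ep: "\<bar>pS m n - Ph M X\<bar> \<le> Cp" using Cp(2)[OF n] by (simp add: X_def)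
    have c1: "\<bar>cWY M (X + 1) / DD X\<bar> \<le> 2 * M / (X + M)"
    proof -
      have nn: "cWY M (X + 1) = 4 * M * (X * (X - 1) * (X - 2))" by (simp add: cWY_def algebra_simps)
      have "4 * M * (X * (X - 1) * (X - 2)) \<le> 4 * M * P3" using XP M by (intro mult_left_mono) auto
      moreover have "0 \<le> 4 * M * (X * (X - 1) * (X - 2))" using X3 M by auto
      ultimately show ?thesis unfolding nn DDe using P3p X M by (simp add: divide_simps abs_div)
    qed
    have c2: "\<bar>cY M (X + 1) / DD X\<bar> \<le> (2 * M + M * (M - 1)) / (X + M)"
    proof -
      define U where "U = X * (X - 1) * (X - 2)"
      define V where "V = X * (X - 1)"
      have nn: "cY M (X + 1) = 4 * M * U + 2 * M * (M - 1) * V" by (simp add: cY_def U_def V_def algebra_simps)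
      have a1: "V \<le> U"
      proof -
        have "X * (X - 1) * 1 \<le> X * (X - 1) * (X - 2)" using X3 by (intro mult_left_mono) auto
        then show ?thesis by (simp add: U_def V_def)
      qed
      have h1: "4 * M * U \<le> 4 * M * P3" using XP M by (intro mult_left_mono) (auto simp: U_def)
      have h2: "2 * M * (M - 1) * V \<le> 2 * M * (M - 1) * P3" using a1 XP M by (intro mult_left_mono) (auto simp: U_def)
      have h3: "0 \<le> 4 * M * U" "0 \<le> 2 * M * (M - 1) * V" using X3 M by (auto simp: U_def V_def)
      have ex: "(4 * M + 2 * M * (M - 1)) * P3 = 4 * M * P3 + 2 * M * (M - 1) * P3" by (simp add: algebra_simps)
      have le: "cY M (X + 1) \<le> (4 * M + 2 * M * (M - 1)) * P3" unfolding nn ex using h1 h2 by linarith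
      have ge: "0 \<le> cY M (X + 1)" unfolding nn using h3 by linarith
      have "\<bar>cY M (X + 1) / DD X\<bar> = cY M (X + 1) / DD X" using ge Dp by simp
      also have "\<dots> \<le> (4 * M + 2 * M * (M - 1)) * P3 / DD X" using le Dp by (simp add: divide_right_mono)
      also have "\<dots> = (2 * M + M * (M - 1)) / (X + M)" unfolding DDe using P3p X M by (simp add: divide_simps) (simp add: algebra_simps)
      finally show ?thesis .
    qed
    have c3: "\<bar>Rqf X / DD X\<bar> \<le> Rc / (X + M)"
    proof -
      have "\<bar>Rqf X\<bar> \<le> Rc * (X * X * X)"
        unfolding Rqf_def Rq_val[OF M0] Rc_def by (rule poly3_bnd) (use X M in auto)
      also have "\<dots> \<le> Rc * (2 * P3)"
        using cube_le[OF X3 M] by (intro mult_left_mono) (auto simp: Rc_def P3_def mult_ac)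
      finally have "\<bar>Rqf X\<bar> \<le> Rc * (2 * P3)" .
      then show ?thesis unfolding DDe using P3p X M by (simp add: divide_simps abs_div)
    qed
    have "\<bar>r n\<bar> \<le> (2 * M / (X + M)) * Cp + ((2 * M + M * (M - 1)) / (X + M)) * Cy + Rc / (X + M)"
    proof -
      have "\<bar>r n\<bar> \<le> \<bar>cWY M (X + 1) / DD X\<bar> * \<bar>pS m n - Ph M X\<bar> + \<bar>cY M (X + 1) / DD X\<bar> * \<bar>yS m n - Yh M X\<bar>
          + \<bar>Rqf X / DD X\<bar>"
        unfolding r_def X_def[symmetric] by (simp add: abs_mult[symmetric]) (rule order.trans[OF abs_triangle_ineq4] ; auto intro: order.trans[OF abs_triangle_ineq] add_mono)
      also have "\<dots> \<le> (2 * M / (X + M)) * Cp + ((2 * M + M * (M - 1)) / (X + M)) * Cy + Rc / (X + M)"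
        using c1 c2 c3 ep ey X M by (intro add_mono mult_mono) auto
      finally show ?thesis .
    qed
    also have "\<dots> = (2 * M * Cp + (2 * M + M * (M - 1)) * Cy + Rc) / (X + M)"
      using X M by (simp add: divide_simps)
    finally have rr: "\<bar>r n\<bar> \<le> (2 * M * Cp + (2 * M + M * (M - 1)) * Cy + Rc) / (X + M)" .
    have "rho n \<le> X / (X + M)" using rhoB[OF n] by (simp add: X_def)
    moreover have "2 * M * Cp + (2 * M + M * (M - 1)) * Cy + Rc \<ge> 0" using Cy(1) Cp(1) M by (simp add: Rc_def)
    ultimately show ?thesis unfolding K_def using X M rr
      by (intro gen_rb[where C = "2 * M * Cp + (2 * M + M * (M - 1)) * Cy + Rc" and M = M and r = "r n" and X = X and rho = "rho n"]) auto
  qed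
  define C where "C = max \<bar>eq 1\<bar> K"
  have "\<bar>eq n\<bar> \<le> C" if "n \<ge> 1" for n
    unfolding C_def by (rule bnd_rec[of 1 eq rho r K n]) (use rec rho rb that in auto)
  moreover have "C \<ge> 0" by (simp add: C_def)
  ultimately show ?thesis unfolding eq_def M_def by blast
qed

lemma stmt_b:
  assumes m: "m \<ge> 2" and n: "n \<ge> 1"
  shows "(real m + 1)^3 * real n^3 / ((real m * real n + real n - 1) * (2 * real m + 1)^2)
         + ((8 * real m^2 - real m - 1) * (real m + 1)^2 * real n^2
            + real m * (real m + 1) * (3 * real m^2 - 6 * real m - 1) * real n
            - real m * (2 * real m^3 + 6 * real m^2 + 3 * real m + 1))
           / ((real m * real n + real n - 1) * (2 * real m + 1)^2 * (3 * real m + 1))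
     = BPh (real m) (XX m n) / (XX m n - 1)"
proof -
  define M where "M = real m"
  define x where "x = real n"
  have M: "M \<ge> 2" using m by (simp add: M_def)
  have x: "x \<ge> 1" using n by (simp add: x_def)
  have "(M + 1) * x \<ge> (M + 1) * 1" using M x by (intro mult_left_mono) auto
  then have X1: "M * x + x - 1 > 0" using M by (simp add: algebra_simps)
  have e: "XX m n = (M + 1) * x" by (simp add: XX_def M_def x_def)
  show ?thesis unfolding e M_def[symmetric] x_def[symmetric] using X1 M
    by (simp add: BPh_def BP2_def vM_def divide_simps) (simp add: algebra_simps power2_eq_square power3_eq_cube)
qed

lemma blue_sq: "real (blue_ext x)^2 = 4 * real (Yc x)^2"
  by (simp add: blue_ext_def Yc_def power2_eq_square)

lemma stmt_q:
  assumes m: "m \<ge> 2"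
  shows "4 * Qh (real m) (XX m n) = 4 * real m^2 * (real m + 1)^2 / ((3 * real m + 1)^2 * (2 * real m + 1)^2) * real n^2
              + (96 * real m^4 + 138 * real m^3 + 83 * real m^2 + 18 * real m + 1)
                / ((5 * real m + 1) * (4 * real m + 1) * (3 * real m + 1)^2)
                * (4 * (real m + 1) * real m / (2 * real m + 1)^2) * real n"
proof -
  define M where "M = real m"
  have M: "M \<ge> 2" using m by (simp add: M_def)
  have h1: "4 * q2M M * (M + 1) * (M + 1) = 4 * M^2 * (M + 1)^2 / ((3 * M + 1)^2 * (2 * M + 1)^2)"
    using M by (simp add: q2M_def divide_simps power2_eq_square)
  have h2: "4 * q1M M * (M + 1) = (96 * M^4 + 138 * M^3 + 83 * M^2 + 18 * M + 1)
                / ((5 * M + 1) * (4 * M + 1) * (3 * M + 1)^2) * (4 * (M + 1) * M / (2 * M + 1)^2)"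
    using M by (simp add: q1M_def divide_simps power2_eq_square) (simp add: algebra_simps power2_eq_square power3_eq_cube power4_eq_xxxx)
  have "4 * Qh M (XX m n) = (4 * q2M M * (M + 1) * (M + 1)) * real n^2 + (4 * q1M M * (M + 1)) * real n"
    by (simp add: Qh_def XX_def M_def algebra_simps power2_eq_square)
  also have "\<dots> = 4 * M^2 * (M + 1)^2 / ((3 * M + 1)^2 * (2 * M + 1)^2) * real n^2
              + (96 * M^4 + 138 * M^3 + 83 * M^2 + 18 * M + 1)
                / ((5 * M + 1) * (4 * M + 1) * (3 * M + 1)^2)
                * (4 * (M + 1) * M / (2 * M + 1)^2) * real n"
    unfolding h1 h2 ..
  finally show ?thesis unfolding M_def .
qed

theorem proposition3:
  fixes m :: nat
  assumes "m \<ge> 2"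
  shows "(\<forall>n\<ge>1. measure_pmf.expectation (pa_circuit m n) (\<lambda>ds. (real (white_ext ds))^2) =
           (real m + 1)^3 * real n^3 / ((real m * real n + real n - 1) * (2 * real m + 1)^2)
         + ((8 * real m^2 - real m - 1) * (real m + 1)^2 * real n^2
            + real m * (real m + 1) * (3 * real m^2 - 6 * real m - 1) * real n
            - real m * (2 * real m^3 + 6 * real m^2 + 3 * real m + 1))
           / ((real m * real n + real n - 1) * (2 * real m + 1)^2 * (3 * real m + 1)))
       \<and> ((\<lambda>n. measure_pmf.expectation (pa_circuit m n) (\<lambda>ds. (real (blue_ext ds))^2)
           - (4 * real m^2 * (real m + 1)^2 / ((3 * real m + 1)^2 * (2 * real m + 1)^2) * real n^2
              + (96 * real m^4 + 138 * real m^3 + 83 * real m^2 + 18 * real m + 1)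
                / ((5 * real m + 1) * (4 * real m + 1) * (3 * real m + 1)^2)
                * (4 * (real m + 1) * real m / (2 * real m + 1)^2) * real n))
         \<in> O(\<lambda>_. 1))"
proof
  show "\<forall>n\<ge>1. measure_pmf.expectation (pa_circuit m n) (\<lambda>ds. (real (white_ext ds))^2) =
           (real m + 1)^3 * real n^3 / ((real m * real n + real n - 1) * (2 * real m + 1)^2)
         + ((8 * real m^2 - real m - 1) * (real m + 1)^2 * real n^2
            + real m * (real m + 1) * (3 * real m^2 - 6 * real m - 1) * real n
            - real m * (2 * real m^3 + 6 * real m^2 + 3 * real m + 1))
           / ((real m * real n + real n - 1) * (2 * real m + 1)^2 * (3 * real m + 1))"
  proof (intro allI impI)
    fix n :: nat assume n: "n \<ge> 1"
    then obtain n' where n': "n = Suc n'" by (cases n) auto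
    have "measure_pmf.expectation (pa_circuit m n) (\<lambda>ds. (real (white_ext ds))^2) = BPh (real m) (XX m n) / (XX m n - 1)"
      using b_cl[OF assms, of n'] by (simp add: bS_def n')
    then show "measure_pmf.expectation (pa_circuit m n) (\<lambda>ds. (real (white_ext ds))^2) =
           (real m + 1)^3 * real n^3 / ((real m * real n + real n - 1) * (2 * real m + 1)^2)
         + ((8 * real m^2 - real m - 1) * (real m + 1)^2 * real n^2
            + real m * (real m + 1) * (3 * real m^2 - 6 * real m - 1) * real n
            - real m * (2 * real m^3 + 6 * real m^2 + 3 * real m + 1))
           / ((real m * real n + real n - 1) * (2 * real m + 1)^2 * (3 * real m + 1))"
      using stmt_b[OF assms n] by simp
  qed
next
  obtain C where C: "C \<ge> 0" "\<And>n. n \<ge> 1 \<Longrightarrow> \<bar>qS m n - Qh (real m) (XX m n)\<bar> \<le> C"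
    using q_err[OF assms] by blast
  show "(\<lambda>n. measure_pmf.expectation (pa_circuit m n) (\<lambda>ds. (real (blue_ext ds))^2)
           - (4 * real m^2 * (real m + 1)^2 / ((3 * real m + 1)^2 * (2 * real m + 1)^2) * real n^2
              + (96 * real m^4 + 138 * real m^3 + 83 * real m^2 + 18 * real m + 1)
                / ((5 * real m + 1) * (4 * real m + 1) * (3 * real m + 1)^2)
                * (4 * (real m + 1) * real m / (2 * real m + 1)^2) * real n))
         \<in> O(\<lambda>_. 1)"
  proof (rule bigoI[where c = "4 * C"])
    show "\<forall>\<^sub>F n in at_top. norm (measure_pmf.expectation (pa_circuit m n) (\<lambda>ds. (real (blue_ext ds))^2)
           - (4 * real m^2 * (real m + 1)^2 / ((3 * real m + 1)^2 * (2 * real m + 1)^2) * real n^2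
              + (96 * real m^4 + 138 * real m^3 + 83 * real m^2 + 18 * real m + 1)
                / ((5 * real m + 1) * (4 * real m + 1) * (3 * real m + 1)^2)
                * (4 * (real m + 1) * real m / (2 * real m + 1)^2) * real n)) \<le> 4 * C * norm (1::real)"
      unfolding eventually_at_top_linorder
    proof (intro exI allI impI)
      fix n :: nat assume n: "n \<ge> 1"
      have E: "measure_pmf.expectation (pa_circuit m n) (\<lambda>ds. (real (blue_ext ds))^2) = 4 * qS m n"
        by (simp add: blue_sq qS_def exp_cmult)
      show "norm (measure_pmf.expectation (pa_circuit m n) (\<lambda>ds. (real (blue_ext ds))^2)
           - (4 * real m^2 * (real m + 1)^2 / ((3 * real m + 1)^2 * (2 * real m + 1)^2) * real n^2
              + (96 * real m^4 + 138 * real m^3 + 83 * real m^2 + 18 * real m + 1)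
                / ((5 * real m + 1) * (4 * real m + 1) * (3 * real m + 1)^2)
                * (4 * (real m + 1) * real m / (2 * real m + 1)^2) * real n)) \<le> 4 * C * norm (1::real)"
        unfolding E stmt_q[OF assms, symmetric] using C(2)[OF n] by simp
    qed
  qed
qed

end
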